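(* Consider NEAR-DGD$^t$ started from a common point $y_{i,0}=s_0$ ($1\le i\le n$). Suppose each $f_i$ is $\mu_i$-strongly convex with $L_i$-Lipschitz gradient; let $x^\star$ be the unique minimizer of $h=\sum_if_i$, and let $$0<\alpha\le\min\{1/L,\,c_4\}.$$ Then for every $\delta>0$ and all $k=0,1,2,\ldots$, $$\|\bar x_{k+1}-x^\star\|^2\le c_1^2\|\bar x_k-x^\star\|^2+c_3^2\beta^{2t},$$ where $c_1^2=1-\alpha c_2+\alpha\delta-\alpha^2\delta c_2$ and $c_3^2=\alpha(\alpha+\delta^{-1})D^2L^2$. In particular, if $\alpha c_2<1$ and $\delta=\frac{c_2}{2(1-\alpha c_2)}$, then $c_1=\sqrt{1-\alpha c_2/2}\in(0,1)$ and for all $k\ge0$ $$\|\bar x_k-x^\star\|\le c_1^k\|\bar x_0-x^\star\|+\frac{LD\beta^t}{c_2}\sqrt{2(2-\alpha c_2)}.$$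
   Context: NEAR-DGD$^t$ (fixed integer $t\ge1$): $\mathbf{x}_k=\mathbf{Z}^t\mathbf{y}_k$, $\mathbf{y}_{k+1}=\mathbf{x}_k-\alpha\nabla\mathbf{f}(\mathbf{x}_k)$, where $\mathbf{Z}=\mathbf{W}\otimes I_p$, $\mathbf{W}$ a symmetric doubly-stochastic $n\times n$ matrix of a connected network ($w_{ii}>0$, $w_{ij}>0$ iff neighbours) with simple eigenvalue $1$ and other eigenvalues in $(-1,1)$, $\beta\in(0,1)$ its second largest eigenvalue magnitude; $\mathbf{x}=(x_1;\ldots;x_n)$, $\nabla\mathbf{f}(\mathbf{x})=(\nabla f_1(x_1);\ldots;\nabla f_n(x_n))$, $\bar x_k=\frac1n\sum_ix_{i,k}$. Constants: $L=\max_iL_i$, $\mu_{\bar f}=\frac1n\sum_i\mu_i$, $L_{\bar f}=\frac1n\sum_iL_i$, $c_2=\frac{2\mu_{\bar f}L_{\bar f}}{\mu_{\bar f}+L_{\bar f}}$, $c_4=\frac{2}{\mu_{\bar f}+L_{\bar f}}$, $D=\|\mathbf{y}_0-\mathbf{u}^\star\|+\frac{\nu+4}{\nu}\|\mathbf{u}^\star\|$ with $\mathbf{u}^\star=(u_1^\star;\ldots;u_n^\star)$, $u_i^\star=\arg\min f_i$, $\nu=2\alpha\gamma$, $\gamma=\min_i\frac{\mu_iL_i}{\mu_i+L_i}$. *)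

theory Defs
  imports "HOL-Analysis.Analysis"
begin

text \<open>Agents are indexed by 0..<n; local variables live in a Euclidean space 'a (= R^p).
  A matrix W is a function nat => nat => real, only entries with indices below n matter.\<close>

definition strongly_convex :: "real \<Rightarrow> ('a::real_normed_vector \<Rightarrow> real) \<Rightarrow> bool" where
  "strongly_convex \<mu> f \<longleftrightarrow>
     (\<forall>x y. \<forall>s::real. 0 \<le> s \<and> s \<le> 1 \<longrightarrow>
        f (s *\<^sub>R x + (1 - s) *\<^sub>R y) \<le> s * f x + (1 - s) * f y - \<mu> / 2 * s * (1 - s) * (norm (x - y))\<^sup>2)"

definition is_gradient :: "('a::real_inner \<Rightarrow> real) \<Rightarrow> ('a \<Rightarrow> 'a) \<Rightarrow> bool" where
  "is_gradient f g \<longleftrightarrow> (\<forall>x. (f has_derivative (\<lambda>h. g x \<bullet> h)) (at x))"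

text \<open>One application of Z = W \<otimes> I_p to a stacked vector.\<close>
definition mix :: "(nat \<Rightarrow> nat \<Rightarrow> real) \<Rightarrow> nat \<Rightarrow> (nat \<Rightarrow> 'a::real_vector) \<Rightarrow> (nat \<Rightarrow> 'a)" where
  "mix W n y = (\<lambda>i. \<Sum>j<n. W i j *\<^sub>R y j)"

primrec near_dgd_y :: "(nat \<Rightarrow> nat \<Rightarrow> real) \<Rightarrow> nat \<Rightarrow> nat \<Rightarrow> real \<Rightarrow> (nat \<Rightarrow> 'a \<Rightarrow> 'a)
     \<Rightarrow> (nat \<Rightarrow> 'a::real_vector) \<Rightarrow> nat \<Rightarrow> (nat \<Rightarrow> 'a)" where
  "near_dgd_y W n t \<alpha> g y0 0 = y0"
| "near_dgd_y W n t \<alpha> g y0 (Suc k) =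
     (let x = (mix W n ^^ t) (near_dgd_y W n t \<alpha> g y0 k) in (\<lambda>i. x i - \<alpha> *\<^sub>R g i (x i)))"

definition near_dgd_x :: "(nat \<Rightarrow> nat \<Rightarrow> real) \<Rightarrow> nat \<Rightarrow> nat \<Rightarrow> real \<Rightarrow> (nat \<Rightarrow> 'a \<Rightarrow> 'a)
     \<Rightarrow> (nat \<Rightarrow> 'a::real_vector) \<Rightarrow> nat \<Rightarrow> (nat \<Rightarrow> 'a)" where
  "near_dgd_x W n t \<alpha> g y0 k = (mix W n ^^ t) (near_dgd_y W n t \<alpha> g y0 k)"

definition avg :: "nat \<Rightarrow> (nat \<Rightarrow> 'a::real_vector) \<Rightarrow> 'a" where
  "avg n x = (1 / real n) *\<^sub>R (\<Sum>i<n. x i)"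

definition snorm :: "nat \<Rightarrow> (nat \<Rightarrow> 'a::real_normed_vector) \<Rightarrow> real" where
  "snorm n x = sqrt (\<Sum>i<n. (norm (x i))\<^sup>2)"

definition symmetric_doubly_stochastic :: "(nat \<Rightarrow> nat \<Rightarrow> real) \<Rightarrow> nat \<Rightarrow> bool" where
  "symmetric_doubly_stochastic W n \<longleftrightarrow>
     (\<forall>i<n. \<forall>j<n. W i j = W j i \<and> 0 \<le> W i j) \<and> (\<forall>i<n. (\<Sum>j<n. W i j) = 1)"

definition neighbours :: "(nat \<Rightarrow> nat \<Rightarrow> real) \<Rightarrow> nat \<Rightarrow> (nat \<times> nat) set" where
  "neighbours W n = {(i, j). i < n \<and> j < n \<and> i \<noteq> j \<and> 0 < W i j}"

definition connected_network :: "(nat \<Rightarrow> nat \<Rightarrow> real) \<Rightarrow> nat \<Rightarrow> bool" where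
  "connected_network W n \<longleftrightarrow> (\<forall>i<n. \<forall>j<n. (i, j) \<in> (neighbours W n)\<^sup>*)"

definition is_eigenvalue :: "(nat \<Rightarrow> nat \<Rightarrow> real) \<Rightarrow> nat \<Rightarrow> real \<Rightarrow> bool" where
  "is_eigenvalue W n e \<longleftrightarrow> (\<exists>v. (\<exists>i<n. v i \<noteq> 0) \<and> (\<forall>i<n. (\<Sum>j<n. W i j * v j) = e * v i))"

text \<open>For a symmetric matrix, eigenvalue 1 is simple iff its eigenspace is the span of the ones vector.\<close>
definition simple_eigenvalue_one :: "(nat \<Rightarrow> nat \<Rightarrow> real) \<Rightarrow> nat \<Rightarrow> bool" where
  "simple_eigenvalue_one W n \<longleftrightarrow> is_eigenvalue W n 1 \<and>
     (\<forall>v. (\<forall>i<n. (\<Sum>j<n. W i j * v j) = v i) \<longrightarrow> (\<forall>i<n. \<forall>j<n. v i = v j))"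

definition second_eig_mag :: "(nat \<Rightarrow> nat \<Rightarrow> real) \<Rightarrow> nat \<Rightarrow> real" where
  "second_eig_mag W n = Max (abs ` {e. is_eigenvalue W n e \<and> e \<noteq> 1})"

end

theory Submission
  imports Defs "Jordan_Normal_Form.Spectral_Radius"
begin

lemma sc_lower:
  fixes f :: "'a::real_inner \<Rightarrow> real"
  assumes sc: "strongly_convex \<mu> f" and gr: "is_gradient f g"
  shows "f x + g x \<bullet> (y - x) + \<mu> / 2 * (norm (y - x))\<^sup>2 \<le> f y"
proof -
  define d where "d = y - x"
  define \<phi> where "\<phi> = (\<lambda>s::real. f (x + s *\<^sub>R d))"
  have fd: "(f has_derivative (\<lambda>h. g x \<bullet> h)) (at (x + 0 *\<^sub>R d))"
    using gr unfolding is_gradient_def by simp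
  have ld: "((\<lambda>s::real. x + s *\<^sub>R d) has_derivative (\<lambda>s. s *\<^sub>R d)) (at 0)"
    by (auto intro!: derivative_eq_intros)
  have eq0: "(\<lambda>s. g x \<bullet> (s *\<^sub>R d)) = (*) (g x \<bullet> d)" by (rule ext) simp
  have "(\<phi> has_derivative (\<lambda>s. g x \<bullet> (s *\<^sub>R d))) (at 0)"
    unfolding \<phi>_def using has_derivative_compose[OF ld fd] by (simp add: o_def)
  then have "(\<phi> has_field_derivative (g x \<bullet> d)) (at 0)"
    unfolding has_field_derivative_def eq0 .
  then have lim: "((\<lambda>s. (\<phi> (0 + s) - \<phi> 0) / s) \<longlongrightarrow> g x \<bullet> d) (at 0)"
    by (simp add: DERIV_def)
  then have lim2: "((\<lambda>s. (\<phi> s - \<phi> 0) / s) \<longlongrightarrow> g x \<bullet> d) (at_right 0)"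
    by (simp add: filterlim_at_split)
  have lim3: "((\<lambda>s. f y - f x - \<mu> / 2 * (1 - s) * (norm d)\<^sup>2) \<longlongrightarrow> f y - f x - \<mu> / 2 * (1 - 0) * (norm d)\<^sup>2) (at_right 0)"
    by (intro tendsto_intros)
  have ev: "eventually (\<lambda>s. (\<phi> s - \<phi> 0) / s \<le> f y - f x - \<mu> / 2 * (1 - s) * (norm d)\<^sup>2) (at_right 0)"
  proof -
    have "eventually (\<lambda>s::real. 0 < s \<and> s < 1) (at_right 0)"
      using eventually_at_right_real[of 0 1] by simp
    then show ?thesis
    proof (rule eventually_mono)
      fix s :: real assume s: "0 < s \<and> s < 1"
      have "f (s *\<^sub>R y + (1 - s) *\<^sub>R x) \<le> s * f y + (1 - s) * f x - \<mu> / 2 * s * (1 - s) * (norm (y - x))\<^sup>2"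
        using sc s unfolding strongly_convex_def by auto
      moreover have "s *\<^sub>R y + (1 - s) *\<^sub>R x = x + s *\<^sub>R d"
        by (simp add: d_def algebra_simps)
      ultimately have "\<phi> s - \<phi> 0 \<le> s * (f y - f x - \<mu> / 2 * (1 - s) * (norm d)\<^sup>2)"
        unfolding \<phi>_def d_def by (simp add: algebra_simps)
      then show "(\<phi> s - \<phi> 0) / s \<le> f y - f x - \<mu> / 2 * (1 - s) * (norm d)\<^sup>2"
        using s by (simp add: divide_simps mult.commute)
    qed
  qed
  have "g x \<bullet> d \<le> f y - f x - \<mu> / 2 * (1 - 0) * (norm d)\<^sup>2"
    using tendsto_le[OF trivial_limit_at_right_real lim3 lim2 ev] .
  then show ?thesis unfolding d_def by simp
qed

lemma lip_upper:
  fixes f :: "'a::real_inner \<Rightarrow> real"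
  assumes gr: "is_gradient f g" and lip: "L-lipschitz_on UNIV g"
  shows "f y \<le> f x + g x \<bullet> (y - x) + L / 2 * (norm (y - x))\<^sup>2"
proof -
  define d where "d = y - x"
  define \<psi> where "\<psi> = (\<lambda>s::real. f (x + s *\<^sub>R d) - s * (g x \<bullet> d) - L / 2 * s\<^sup>2 * (norm d)\<^sup>2)"
  have L0: "0 \<le> L" using lip unfolding lipschitz_on_def by auto
  have "\<psi> 1 \<le> \<psi> 0"
  proof (rule DERIV_nonpos_imp_nonincreasing[of 0 1 \<psi>])
    fix s :: real assume s: "0 \<le> s" "s \<le> 1"
    have fd: "(f has_derivative (\<lambda>h. g (x + s *\<^sub>R d) \<bullet> h)) (at (x + s *\<^sub>R d))"
      using gr unfolding is_gradient_def by simp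
    have ld: "((\<lambda>s::real. x + s *\<^sub>R d) has_derivative (\<lambda>s. s *\<^sub>R d)) (at s)"
      by (auto intro!: derivative_eq_intros)
    have eq0: "(\<lambda>h. g (x + s *\<^sub>R d) \<bullet> (h *\<^sub>R d)) = (*) (g (x + s *\<^sub>R d) \<bullet> d)" by (rule ext) simp
    have "((\<lambda>s. f (x + s *\<^sub>R d)) has_derivative (\<lambda>h. g (x + s *\<^sub>R d) \<bullet> (h *\<^sub>R d))) (at s)"
      using has_derivative_compose[OF ld fd] by (simp add: o_def)
    then have d1: "((\<lambda>s. f (x + s *\<^sub>R d)) has_field_derivative (g (x + s *\<^sub>R d) \<bullet> d)) (at s)"
      unfolding has_field_derivative_def eq0 .
    have "(\<psi> has_field_derivative (g (x + s *\<^sub>R d) \<bullet> d - g x \<bullet> d - L / 2 * (2 * s) * (norm d)\<^sup>2)) (at s)"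
      unfolding \<psi>_def
      by (rule derivative_eq_intros d1 | simp)+
    moreover have "g (x + s *\<^sub>R d) \<bullet> d - g x \<bullet> d - L / 2 * (2 * s) * (norm d)\<^sup>2 \<le> 0"
    proof -
      have "g (x + s *\<^sub>R d) \<bullet> d - g x \<bullet> d = (g (x + s *\<^sub>R d) - g x) \<bullet> d"
        by (simp add: inner_diff_left)
      also have "\<dots> \<le> norm (g (x + s *\<^sub>R d) - g x) * norm d"
        by (rule norm_cauchy_schwarz)
      also have "norm (g (x + s *\<^sub>R d) - g x) \<le> L * norm (s *\<^sub>R d)"
        using lip unfolding lipschitz_on_def dist_norm by (metis UNIV_I add_diff_cancel_left')
      then have "norm (g (x + s *\<^sub>R d) - g x) * norm d \<le> L * norm (s *\<^sub>R d) * norm d"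
        by (simp add: mult_right_mono)
      also have "L * norm (s *\<^sub>R d) * norm d = L * s * (norm d)\<^sup>2"
        using s by (simp add: power2_eq_square)
      finally show ?thesis by simp
    qed
    ultimately show "\<exists>y. (\<psi> has_field_derivative y) (at s) \<and> y \<le> 0" by blast
  qed simp
  then show ?thesis unfolding \<psi>_def d_def by simp
qed

lemma coco:
  fixes f :: "'a::real_inner \<Rightarrow> real"
  assumes low: "\<And>x y. f x + g x \<bullet> (y - x) + \<mu> / 2 * (norm (y - x))\<^sup>2 \<le> f y"
    and up: "\<And>x y. f y \<le> f x + g x \<bullet> (y - x) + L / 2 * (norm (y - x))\<^sup>2"
    and mL: "\<mu> \<le> L"
  shows "\<mu> * L * (norm (x - y))\<^sup>2 + (norm (g x - g y))\<^sup>2 \<le> (\<mu> + L) * ((g x - g y) \<bullet> (x - y))"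
proof -
  define h where "h = (\<lambda>z. f z - \<mu> / 2 * (norm z)\<^sup>2)"
  define gh where "gh = (\<lambda>z. g z - \<mu> *\<^sub>R z)"
  define L' where "L' = L - \<mu>"
  have L'0: "0 \<le> L'" using mL by (simp add: L'_def)
  have nsq: "(norm (y - x))\<^sup>2 = (norm y)\<^sup>2 - (norm x)\<^sup>2 - 2 * (x \<bullet> (y - x))" for x y :: 'a
    by (simp add: power2_norm_eq_inner inner_diff_left inner_diff_right inner_commute algebra_simps)
  have hid: "h y - h x - gh x \<bullet> (y - x) = f y - f x - g x \<bullet> (y - x) - \<mu> / 2 * (norm (y - x))\<^sup>2" for x y
    unfolding h_def gh_def power2_norm_eq_inner by (simp add: inner_diff_left inner_diff_right inner_commute algebra_simps)
  have hlow: "h x + gh x \<bullet> (y - x) \<le> h y" for x y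
    using low[of x y] hid[of y x] by linarith
  have hup: "h y \<le> h x + gh x \<bullet> (y - x) + L' / 2 * (norm (y - x))\<^sup>2" for x y
  proof -
    have "L' / 2 * (norm (y - x))\<^sup>2 = L / 2 * (norm (y - x))\<^sup>2 - \<mu> / 2 * (norm (y - x))\<^sup>2"
      by (simp add: L'_def field_simps)
    then show ?thesis using up[where x=x and y=y] hid[of y x] by linarith
  qed
  define t where "t = (if L' = 0 then 1 else 1 / L')"
  have t0: "0 < t" using L'0 by (simp add: t_def)
  have half: "h a + gh a \<bullet> (b - a) \<le> h b - t * (norm (gh b - gh a))\<^sup>2 + L' / 2 * (t\<^sup>2 * (norm (gh b - gh a))\<^sup>2)" for a b
  proof -
    define Gab where "Gab = gh b - gh a"
    define z where "z = b - t *\<^sub>R Gab"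
    have ineq: "h a + gh a \<bullet> (z - a) \<le> h b + gh b \<bullet> (z - b) + L' / 2 * (norm (z - b))\<^sup>2"
      using hlow[where x=a and y=z] hup[where x=b and y=z] by linarith
    have e1: "gh a \<bullet> (z - a) = gh a \<bullet> (b - a) - t * (gh a \<bullet> Gab)"
      by (simp add: z_def inner_diff_right algebra_simps)
    have e2: "gh b \<bullet> (z - b) = - t * (gh b \<bullet> Gab)"
      by (simp add: z_def)
    have e3: "(norm (z - b))\<^sup>2 = t\<^sup>2 * (norm Gab)\<^sup>2"
      by (simp add: z_def power_mult_distrib)
    have nn: "(norm Gab)\<^sup>2 = gh b \<bullet> Gab - gh a \<bullet> Gab"
      using inner_diff_left[of "gh b" "gh a" Gab] by (simp add: power2_norm_eq_inner Gab_def[symmetric])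
    have e4: "t * (gh b \<bullet> Gab) - t * (gh a \<bullet> Gab) = t * (norm Gab)\<^sup>2"
      unfolding nn by (simp add: right_diff_distrib)
    have "h a + gh a \<bullet> (b - a) \<le> h b - t * (norm Gab)\<^sup>2 + L' / 2 * (t\<^sup>2 * (norm Gab)\<^sup>2)"
      using ineq unfolding e1 e2 e3 using e4 by linarith
    then show ?thesis unfolding Gab_def .
  qed
  have key: "(norm (gh y - gh x))\<^sup>2 \<le> L' * ((gh y - gh x) \<bullet> (y - x))" for x y
  proof -
    define G where "G = gh y - gh x"
    have nG: "norm (gh x - gh y) = norm G" by (simp add: G_def norm_minus_commute)
    have A: "h x + gh x \<bullet> (y - x) \<le> h y - t * (norm G)\<^sup>2 + L' / 2 * (t\<^sup>2 * (norm G)\<^sup>2)"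
      using half[of x y] unfolding G_def .
    have B0: "h y + gh y \<bullet> (x - y) \<le> h x - t * (norm G)\<^sup>2 + L' / 2 * (t\<^sup>2 * (norm G)\<^sup>2)"
      using half[of y x] unfolding nG .
    have e5: "gh x \<bullet> (y - x) + gh y \<bullet> (x - y) = - (G \<bullet> (y - x))"
      by (simp add: G_def inner_diff_left inner_diff_right algebra_simps)
    have S: "2 * t * (norm G)\<^sup>2 - 2 * (L' / 2 * (t\<^sup>2 * (norm G)\<^sup>2)) \<le> G \<bullet> (y - x)"
      using A B0 e5 by linarith
    show ?thesis
    proof (cases "L' = 0")
      case True
      have "G \<bullet> (y - x) \<le> 0"
      proof -
        have hxy: "h y \<le> h x + gh x \<bullet> (y - x)" using hup[where x=x and y=y] True by simp
        have hyx: "h x \<le> h y + gh y \<bullet> (x - y)" using hup[where x=y and y=x] True by simp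
        have "0 \<le> gh x \<bullet> (y - x) + gh y \<bullet> (x - y)" using hxy hyx by linarith
        then show ?thesis using e5 by linarith
      qed
      moreover have "2 * t * (norm G)\<^sup>2 - 2 * (L' / 2 * (t\<^sup>2 * (norm G)\<^sup>2)) = 2 * (norm G)\<^sup>2"
        using True by (simp add: t_def)
      ultimately have "(norm G)\<^sup>2 \<le> 0" using S by linarith
      then show ?thesis using True by (simp add: G_def)
    next
      case False
      then have Lp: "0 < L'" using L'0 by simp
      have "2 * t * (norm G)\<^sup>2 - 2 * (L' / 2 * (t\<^sup>2 * (norm G)\<^sup>2)) = (norm G)\<^sup>2 / L'"
        using False by (simp add: t_def power2_eq_square field_simps)
      with S have "(norm G)\<^sup>2 / L' \<le> G \<bullet> (y - x)" by simp
      then show ?thesis using Lp by (simp add: G_def field_simps)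
    qed
  qed
  have "(norm (gh x - gh y))\<^sup>2 \<le> L' * ((gh x - gh y) \<bullet> (x - y))" by (rule key)
  then show ?thesis unfolding gh_def L'_def
    by (simp add: power2_norm_eq_inner inner_diff_left inner_diff_right inner_commute algebra_simps)
qed

lemma contraction:
  fixes g :: "'a::real_inner \<Rightarrow> 'a"
  assumes cc: "\<mu> * L * (norm (x - y))\<^sup>2 + (norm (g x - g y))\<^sup>2 \<le> (\<mu> + L) * ((g x - g y) \<bullet> (x - y))"
    and pos: "0 < \<mu> + L" and a0: "0 < \<alpha>" and a1: "\<alpha> \<le> 2 / (\<mu> + L)"
  shows "(norm ((x - \<alpha> *\<^sub>R g x) - (y - \<alpha> *\<^sub>R g y)))\<^sup>2 \<le> (1 - \<alpha> * (2 * \<mu> * L / (\<mu> + L))) * (norm (x - y))\<^sup>2"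
proof -
  define d where "d = x - y"
  define D where "D = g x - g y"
  have e: "(x - \<alpha> *\<^sub>R g x) - (y - \<alpha> *\<^sub>R g y) = d - \<alpha> *\<^sub>R D" by (simp add: d_def D_def algebra_simps)
  have "(norm (d - \<alpha> *\<^sub>R D))\<^sup>2 = (norm d)\<^sup>2 - 2 * \<alpha> * (D \<bullet> d) + \<alpha>\<^sup>2 * (norm D)\<^sup>2"
    unfolding power2_norm_eq_inner by (simp add: inner_diff_left inner_diff_right inner_commute algebra_simps power2_eq_square)
  moreover have "D \<bullet> d \<ge> (\<mu> * L * (norm d)\<^sup>2 + (norm D)\<^sup>2) / (\<mu> + L)"
    using cc pos by (simp add: d_def D_def field_simps)
  moreover have "\<alpha>\<^sup>2 \<le> 2 * \<alpha> / (\<mu> + L)"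
  proof -
    have "\<alpha> * (\<mu> + L) \<le> 2" using a1 pos by (simp add: field_simps)
    then have "\<alpha> * (\<alpha> * (\<mu> + L)) \<le> \<alpha> * 2" using a0 by (intro mult_left_mono) auto
    then show ?thesis using pos by (simp add: field_simps power2_eq_square algebra_simps)
  qed
  ultimately have "(norm (d - \<alpha> *\<^sub>R D))\<^sup>2 \<le> (norm d)\<^sup>2 - 2 * \<alpha> * ((\<mu> * L * (norm d)\<^sup>2 + (norm D)\<^sup>2) / (\<mu> + L)) + 2 * \<alpha> / (\<mu> + L) * (norm D)\<^sup>2"
  proof -
    assume h1: "(norm (d - \<alpha> *\<^sub>R D))\<^sup>2 = (norm d)\<^sup>2 - 2 * \<alpha> * (D \<bullet> d) + \<alpha>\<^sup>2 * (norm D)\<^sup>2"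
      and h2: "D \<bullet> d \<ge> (\<mu> * L * (norm d)\<^sup>2 + (norm D)\<^sup>2) / (\<mu> + L)" and h3: "\<alpha>\<^sup>2 \<le> 2 * \<alpha> / (\<mu> + L)"
    have "2 * \<alpha> * ((\<mu> * L * (norm d)\<^sup>2 + (norm D)\<^sup>2) / (\<mu> + L)) \<le> 2 * \<alpha> * (D \<bullet> d)"
      by (rule mult_left_mono[OF h2]) (use a0 in simp)
    moreover have "\<alpha>\<^sup>2 * (norm D)\<^sup>2 \<le> 2 * \<alpha> / (\<mu> + L) * (norm D)\<^sup>2"
      by (rule mult_right_mono[OF h3]) simp
    ultimately show ?thesis using h1 by linarith
  qed
  also have "\<dots> = (1 - \<alpha> * (2 * \<mu> * L / (\<mu> + L))) * (norm d)\<^sup>2"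
  proof -
    have "2 * \<alpha> * ((\<mu> * L * (norm d)\<^sup>2 + (norm D)\<^sup>2) / (\<mu> + L)) = 2 * \<alpha> * \<mu> * L * (norm d)\<^sup>2 / (\<mu> + L) + 2 * \<alpha> / (\<mu> + L) * (norm D)\<^sup>2"
      by (simp add: add_divide_distrib algebra_simps)
    moreover have "(1 - \<alpha> * (2 * \<mu> * L / (\<mu> + L))) * (norm d)\<^sup>2 = (norm d)\<^sup>2 - 2 * \<alpha> * \<mu> * L * (norm d)\<^sup>2 / (\<mu> + L)"
      by (simp add: algebra_simps)
    ultimately show ?thesis by linarith
  qed
  finally have F: "(norm (d - \<alpha> *\<^sub>R D))\<^sup>2 \<le> (1 - \<alpha> * (2 * \<mu> * L / (\<mu> + L))) * (norm d)\<^sup>2" .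
  show ?thesis unfolding e d_def[symmetric] by (rule F)
qed

lemma min_grad_zero:
  fixes f :: "'a::real_inner \<Rightarrow> real"
  assumes up: "\<And>y. f y \<le> f x + g x \<bullet> (y - x) + L / 2 * (norm (y - x))\<^sup>2"
    and L0: "0 \<le> L" and mn: "\<And>z. f x \<le> f z"
  shows "g x = 0"
proof -
  define t where "t = 1 / (L + 1)"
  have t0: "0 < t" using L0 by (simp add: t_def)
  have tL: "L * t < 1" using L0 by (simp add: t_def field_simps)
  have F1: "f x \<le> f x + g x \<bullet> (- (t *\<^sub>R g x)) + L / 2 * (norm (- (t *\<^sub>R g x)))\<^sup>2"
    using mn[of "x - t *\<^sub>R g x"] up[of "x - t *\<^sub>R g x"] by simp
  have E1: "g x \<bullet> (- (t *\<^sub>R g x)) = - t * (norm (g x))\<^sup>2"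
    by (simp add: power2_norm_eq_inner)
  have E2: "(norm (- (t *\<^sub>R g x)))\<^sup>2 = t\<^sup>2 * (norm (g x))\<^sup>2"
    by (simp add: power_mult_distrib)
  have "0 \<le> g x \<bullet> (- (t *\<^sub>R g x)) + L / 2 * (norm (- (t *\<^sub>R g x)))\<^sup>2"
    using F1 by linarith
  then have "0 \<le> - t * (norm (g x))\<^sup>2 + L / 2 * (t\<^sup>2 * (norm (g x))\<^sup>2)"
    by (simp only: E1 E2)
  then have "0 \<le> t * (norm (g x))\<^sup>2 * (L * t / 2 - 1)"
    by (simp add: algebra_simps power2_eq_square)
  moreover have "L * t / 2 - 1 < 0" using tL by simp
  ultimately have "t * (norm (g x))\<^sup>2 \<le> 0"
    by (simp add: zero_le_mult_iff)
  then have "(norm (g x))\<^sup>2 \<le> 0" using t0 by (simp add: mult_le_0_iff)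
  then show ?thesis by simp
qed

lemma mu_le_L:
  fixes f :: "'a::euclidean_space \<Rightarrow> real"
  assumes low: "\<And>x y. f x + g x \<bullet> (y - x) + \<mu> / 2 * (norm (y - x))\<^sup>2 \<le> f y"
    and up: "\<And>x y. f y \<le> f x + g x \<bullet> (y - x) + L / 2 * (norm (y - x))\<^sup>2"
  shows "\<mu> \<le> L"
proof -
  obtain b :: 'a where b: "b \<in> Basis" using nonempty_Basis by blast
  have n1: "(norm b)\<^sup>2 = 1" using b by simp
  have a: "f 0 + g 0 \<bullet> b + \<mu> / 2 \<le> f b" using low[where x=0 and y=b] n1 by simp
  have c: "f b \<le> f 0 + g 0 \<bullet> b + L / 2" using up[where x=0 and y=b] n1 by simp
  show ?thesis using a c by linarith
qed

lemma quad_zero: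
  fixes a C :: real
  assumes h: "\<And>\<epsilon>. 2 * \<epsilon> * a \<le> \<epsilon>\<^sup>2 * C"
  shows "a = 0"
proof -
  define C' where "C' = \<bar>C\<bar> + 1"
  have C'0: "0 < C'" by (simp add: C'_def)
  have CC: "C \<le> C'" by (simp add: C'_def)
  have "2 * (a / C') * a \<le> (a / C')\<^sup>2 * C" by (rule h)
  also have "\<dots> \<le> (a / C')\<^sup>2 * C'" by (rule mult_left_mono[OF CC]) simp
  also have "\<dots> = a\<^sup>2 / C'" using C'0 by (simp add: power2_eq_square field_simps)
  finally have "2 * (a\<^sup>2 / C') \<le> a\<^sup>2 / C'" by (simp add: power2_eq_square)
  then have "a\<^sup>2 / C' \<le> 0" by simp
  then have "a\<^sup>2 \<le> 0" using C'0 by (simp add: divide_le_0_iff)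
  then show ?thesis by simp
qed

lemma compact_K:
  fixes n :: nat
  shows "compact {v::nat\<Rightarrow>real. (\<forall>i. n \<le> i \<longrightarrow> v i = 0) \<and> (\<Sum>i<n. v i) = 0 \<and> (\<Sum>i<n. (v i)\<^sup>2) = 1}"
    (is "compact ?K")
proof -
  define S where "S = (\<lambda>i::nat. if i < n then {-1..1::real} else {0})"
  have cB: "compactin (product_topology (\<lambda>i. euclidean) UNIV) (PiE UNIV S)"
    unfolding compactin_PiE by (auto simp: S_def)
  then have cB': "compact (PiE UNIV S)"
    by (simp add: euclidean_product_topology)
  have cl: "closed {v::nat\<Rightarrow>real. (\<Sum>i<n. v i) = 0 \<and> (\<Sum>i<n. (v i)\<^sup>2) = 1}"
  proof -
    have c1: "continuous_on UNIV (\<lambda>v::nat\<Rightarrow>real. \<Sum>i<n. v i)"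
      by (rule continuous_on_sum) (rule continuous_on_product_coordinates)
    have c2: "continuous_on UNIV (\<lambda>v::nat\<Rightarrow>real. \<Sum>i<n. (v i)\<^sup>2)"
      by (rule continuous_on_sum, rule continuous_on_power, rule continuous_on_product_coordinates)
    have "closed {v::nat\<Rightarrow>real. (\<Sum>i<n. v i) = 0}"
      by (rule closed_Collect_eq[OF c1]) (rule continuous_on_const)
    moreover have "closed {v::nat\<Rightarrow>real. (\<Sum>i<n. (v i)\<^sup>2) = 1}"
      by (rule closed_Collect_eq[OF c2]) (rule continuous_on_const)
    ultimately show ?thesis by (simp add: Collect_conj_eq closed_Int)
  qed
  have "?K = PiE UNIV S \<inter> {v::nat\<Rightarrow>real. (\<Sum>i<n. v i) = 0 \<and> (\<Sum>i<n. (v i)\<^sup>2) = 1}"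
  proof (rule Set.set_eqI, rule HOL.iffI)
    fix v :: "nat \<Rightarrow> real" assume v: "v \<in> ?K"
    have "v i \<in> S i" for i
    proof (cases "i < n")
      case True
      have "(v i)\<^sup>2 \<le> (\<Sum>j<n. (v j)\<^sup>2)"
        by (rule member_le_sum) (use True in auto)
      then have "(v i)\<^sup>2 \<le> 1" using v by simp
      then have "\<bar>v i\<bar> \<le> 1" by (simp add: abs_square_le_1)
      then show ?thesis using True by (auto simp: S_def)
    next
      case False
      then show ?thesis using v by (auto simp: S_def)
    qed
    then have "v \<in> PiE UNIV S" by (simp add: PiE_UNIV_domain Pi_iff)
    then show "v \<in> PiE UNIV S \<inter> {v::nat\<Rightarrow>real. (\<Sum>i<n. v i) = 0 \<and> (\<Sum>i<n. (v i)\<^sup>2) = 1}"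
      using v by simp
  next
    fix v :: "nat \<Rightarrow> real"
    assume v: "v \<in> PiE UNIV S \<inter> {v::nat\<Rightarrow>real. (\<Sum>i<n. v i) = 0 \<and> (\<Sum>i<n. (v i)\<^sup>2) = 1}"
    then have vs: "v i \<in> S i" for i by (simp add: PiE_UNIV_domain Pi_iff)
    have c: "(\<Sum>i<n. v i) = 0 \<and> (\<Sum>i<n. (v i)\<^sup>2) = 1" using v by simp
    have "\<forall>i. n \<le> i \<longrightarrow> v i = 0"
    proof (intro allI impI)
      fix i assume "n \<le> i"
      then have "S i = {0}" by (simp add: S_def)
      with vs[of i] show "v i = 0" by simp
    qed
    then show "v \<in> ?K" using c by simp
  qed
  then show ?thesis using compact_Int_closed[OF cB' cl] by simp
qed

lemma continuous_Q:
  "continuous_on UNIV (\<lambda>v::nat\<Rightarrow>real. \<Sum>i<n. (\<Sum>j<n. W i j * v j)\<^sup>2)"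
  by (rule continuous_on_sum, rule continuous_on_power, rule continuous_on_sum,
      rule continuous_on_mult[OF continuous_on_const continuous_on_product_coordinates])

lemma sum_two_first:
  fixes f :: "nat \<Rightarrow> real"
  assumes "2 \<le> n" "\<And>i. 2 \<le> i \<Longrightarrow> f i = 0"
  shows "(\<Sum>i<n. f i) = f 0 + f 1"
proof -
  obtain m where m: "n = Suc (Suc m)" using assms(1) by (metis add_2_eq_Suc le_Suc_ex)
  have "(\<Sum>i<m. f (Suc (Suc i))) = 0" using assms(2) by simp
  moreover have "(\<Sum>i<n. f i) = f 0 + (f (Suc 0) + (\<Sum>i<m. f (Suc (Suc i))))"
    unfolding m by (simp only: sum.lessThan_Suc_shift)
  ultimately show ?thesis by simp
qed

lemma sq_expand:
  fixes a b :: "nat \<Rightarrow> real"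
  shows "(\<Sum>i\<in>A. (a i + \<epsilon> * b i)\<^sup>2) = (\<Sum>i\<in>A. (a i)\<^sup>2) + 2 * \<epsilon> * (\<Sum>i\<in>A. a i * b i) + \<epsilon>\<^sup>2 * (\<Sum>i\<in>A. (b i)\<^sup>2)"
proof -
  have "(\<Sum>i\<in>A. (a i + \<epsilon> * b i)\<^sup>2) = (\<Sum>i\<in>A. (a i)\<^sup>2 + 2 * \<epsilon> * (a i * b i) + \<epsilon>\<^sup>2 * (b i)\<^sup>2)"
    by (rule sum.cong) (simp_all add: power2_eq_square algebra_simps)
  also have "\<dots> = (\<Sum>i\<in>A. (a i)\<^sup>2) + (\<Sum>i\<in>A. 2 * \<epsilon> * (a i * b i)) + (\<Sum>i\<in>A. \<epsilon>\<^sup>2 * (b i)\<^sup>2)"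
    by (simp add: sum.distrib)
  also have "\<dots> = (\<Sum>i\<in>A. (a i)\<^sup>2) + 2 * \<epsilon> * (\<Sum>i\<in>A. a i * b i) + \<epsilon>\<^sup>2 * (\<Sum>i\<in>A. (b i)\<^sup>2)"
    by (simp add: sum_distrib_left)
  finally show ?thesis .
qed

lemma scalar_spec:
  fixes W :: "nat \<Rightarrow> nat \<Rightarrow> real" and v :: "nat \<Rightarrow> real"
  assumes sym: "\<forall>i<n. \<forall>j<n. W i j = W j i"
    and rows: "\<forall>i<n. (\<Sum>j<n. W i j) = 1"
    and simp1: "simple_eigenvalue_one W n"
    and fin: "finite {e. is_eigenvalue W n e}"
    and v0: "(\<Sum>i<n. v i) = 0"
  shows "(\<Sum>i<n. (\<Sum>j<n. W i j * v j)\<^sup>2) \<le> (second_eig_mag W n)\<^sup>2 * (\<Sum>i<n. (v i)\<^sup>2)"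
proof (cases "n \<le> 1")
  case True
  then consider "n = 0" | "n = 1" by linarith
  then show ?thesis
  proof cases
    case 1 then show ?thesis by simp
  next
    case 2 then have "v 0 = 0" using v0 by simp
    then show ?thesis using 2 by simp
  qed
next
  case False
  then have n2: "2 \<le> n" by simp
  define M where "M = (\<lambda>u::nat\<Rightarrow>real. \<lambda>i. \<Sum>j<n. W i j * u j)"
  define nq where "nq = (\<lambda>u::nat\<Rightarrow>real. \<Sum>i<n. (u i)\<^sup>2)"
  define ip where "ip = (\<lambda>u w::nat\<Rightarrow>real. \<Sum>i<n. u i * w i)"
  have nq_ip: "nq u = ip u u" for u by (simp add: nq_def ip_def power2_eq_square)
  have ip_comm: "ip u w = ip w u" for u w by (simp add: ip_def mult.commute)
  have symM: "ip (M x) y = ip x (M y)" for x y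
  proof -
    have "ip (M x) y = (\<Sum>i<n. \<Sum>j<n. W i j * x j * y i)"
      by (simp add: ip_def M_def sum_distrib_right)
    also have "\<dots> = (\<Sum>j<n. \<Sum>i<n. W i j * x j * y i)" by (rule sum.swap)
    also have "\<dots> = (\<Sum>j<n. x j * (\<Sum>i<n. W j i * y i))"
      by (auto simp: sum_distrib_left sym mult_ac intro!: sum.cong)
    also have "\<dots> = ip x (M y)" by (simp add: ip_def M_def)
    finally show ?thesis .
  qed
  have colsum: "(\<Sum>i<n. W i j) = 1" if "j < n" for j
  proof -
    have "(\<Sum>i<n. W i j) = (\<Sum>i<n. W j i)" using sym that by (intro sum.cong) auto
    then show ?thesis using rows that by simp
  qed
  have Msum: "(\<Sum>i<n. M u i) = (\<Sum>j<n. u j)" for u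
  proof -
    have "(\<Sum>i<n. M u i) = (\<Sum>i<n. \<Sum>j<n. W i j * u j)" by (simp add: M_def)
    also have "\<dots> = (\<Sum>j<n. \<Sum>i<n. W i j * u j)" by (rule sum.swap)
    also have "\<dots> = (\<Sum>j<n. (\<Sum>i<n. W i j) * u j)" by (simp add: sum_distrib_right)
    finally have "(\<Sum>i<n. M u i) = (\<Sum>j<n. (\<Sum>i<n. W i j) * u j)" .
    also have "\<dots> = (\<Sum>j<n. u j)" using colsum by simp
    finally show ?thesis .
  qed
  have nq_nonneg: "0 \<le> nq u" for u by (simp add: nq_def sum_nonneg)
  have nq_zero: "nq u = 0 \<Longrightarrow> i < n \<Longrightarrow> u i = 0" for u i
    unfolding nq_def by (subst (asm) sum_nonneg_eq_0_iff) auto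
  define K where "K = {v::nat\<Rightarrow>real. (\<forall>i. n \<le> i \<longrightarrow> v i = 0) \<and> (\<Sum>i<n. v i) = 0 \<and> (\<Sum>i<n. (v i)\<^sup>2) = 1}"
  have cK: "compact K" unfolding K_def by (rule compact_K)
  have neK: "K \<noteq> {}"
  proof -
    define w where "w = (\<lambda>i::nat. if i = 0 then 1 / sqrt 2 else if i = 1 then - 1 / sqrt 2 else (0::real))"
    have "(\<Sum>i<n. w i) = w 0 + w 1" by (rule sum_two_first[OF n2]) (simp add: w_def)
    then have s1: "(\<Sum>i<n. w i) = 0" by (simp add: w_def)
    have "(\<Sum>i<n. (w i)\<^sup>2) = (w 0)\<^sup>2 + (w 1)\<^sup>2" by (rule sum_two_first[OF n2]) (simp add: w_def)
    then have s2: "(\<Sum>i<n. (w i)\<^sup>2) = 1" by (simp add: w_def power_divide)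
    have "w \<in> K" unfolding K_def using s1 s2 n2 by (auto simp: w_def)
    then show ?thesis by blast
  qed
  have cQ: "continuous_on K (\<lambda>u. nq (M u))"
    unfolding nq_def M_def by (rule continuous_on_subset[OF continuous_Q]) simp
  obtain vs where vsK: "vs \<in> K" and vsmax: "\<And>u. u \<in> K \<Longrightarrow> nq (M u) \<le> nq (M vs)"
    using continuous_attains_sup[OF cK neK cQ] by blast
  define s2 where "s2 = nq (M vs)"
  have vs_sum: "(\<Sum>i<n. vs i) = 0" and vs_nq: "nq vs = 1"
    using vsK by (auto simp: K_def nq_def)
  have s2_0: "0 \<le> s2" by (simp add: s2_def nq_nonneg)
  have claim1: "nq (M u) \<le> s2 * nq u" if us: "(\<Sum>i<n. u i) = 0" for u
  proof -
    define u' where "u' = (\<lambda>i. if i < n then u i else 0)"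
    have Mu': "M u' = M u" unfolding M_def u'_def by (rule ext, rule sum.cong) auto
    have nqu': "nq u' = nq u" unfolding nq_def u'_def by (rule sum.cong) auto
    have su': "(\<Sum>i<n. u' i) = 0" using us unfolding u'_def by simp
    show ?thesis
    proof (cases "nq u = 0")
      case True
      then have "\<And>j. j < n \<Longrightarrow> u j = 0" using nq_zero by blast
      then have "M u i = 0" for i unfolding M_def by simp
      then have "nq (M u) = 0" by (simp add: nq_def)
      then show ?thesis using True by simp
    next
      case False
      then have pos: "0 < nq u" using nq_nonneg[of u] by simp
      define c where "c = 1 / sqrt (nq u)"
      define w where "w = (\<lambda>i. c * u' i)"
      have c2: "c\<^sup>2 = 1 / nq u" using pos by (simp add: c_def power_divide)
      have "w \<in> K"
      proof -
        have "(\<Sum>i<n. w i) = 0" using su' by (simp add: w_def sum_distrib_left[symmetric])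
        moreover have "(\<Sum>i<n. (w i)\<^sup>2) = 1"
        proof -
          have "(\<Sum>i<n. (w i)\<^sup>2) = c\<^sup>2 * nq u'" by (simp add: w_def nq_def power_mult_distrib sum_distrib_left)
          then show ?thesis using c2 nqu' pos by simp
        qed
        ultimately show ?thesis unfolding K_def by (auto simp: w_def u'_def)
      qed
      then have "nq (M w) \<le> s2" using vsmax s2_def by simp
      moreover have "nq (M w) = c\<^sup>2 * nq (M u)"
      proof -
        have "M w = (\<lambda>i. c * M u' i)" unfolding w_def M_def
          by (simp add: sum_distrib_left mult_ac)
        then have "M w = (\<lambda>i. c * M u i)" unfolding Mu' .
        then show ?thesis by (simp add: nq_def power_mult_distrib sum_distrib_left)
      qed
      ultimately have "nq (M u) / nq u \<le> s2" using c2 by simp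
      then show ?thesis using pos by (simp add: divide_le_eq mult.commute)
    qed
  qed
  have claim2: "ip (M (M vs)) u = 0" if us: "(\<Sum>i<n. u i) = 0" and uo: "ip u vs = 0" for u
  proof (rule quad_zero)
    fix \<epsilon> :: real
    define w where "w = (\<lambda>i. vs i + \<epsilon> * u i)"
    have ws: "(\<Sum>i<n. w i) = 0" using us vs_sum by (simp add: w_def sum.distrib sum_distrib_left[symmetric])
    have Mw: "M w = (\<lambda>i. M vs i + \<epsilon> * M u i)"
      unfolding w_def M_def by (simp add: sum.distrib sum_distrib_left algebra_simps)
    have e1: "nq (M w) = s2 + 2 * \<epsilon> * ip (M vs) (M u) + \<epsilon>\<^sup>2 * nq (M u)"
      unfolding Mw s2_def nq_def ip_def by (rule sq_expand)
    have e2: "nq w = 1 + \<epsilon>\<^sup>2 * nq u"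
    proof -
      have "nq w = nq vs + 2 * \<epsilon> * ip vs u + \<epsilon>\<^sup>2 * nq u"
        unfolding w_def nq_def ip_def by (rule sq_expand)
      then show ?thesis using vs_nq uo ip_comm[of vs u] by simp
    qed
    have "nq (M w) \<le> s2 * nq w" by (rule claim1[OF ws])
    then have "s2 + 2 * \<epsilon> * ip (M vs) (M u) + \<epsilon>\<^sup>2 * nq (M u) \<le> s2 + s2 * (\<epsilon>\<^sup>2 * nq u)"
      unfolding e1 e2 by (simp add: algebra_simps)
    then have "2 * \<epsilon> * ip (M vs) (M u) \<le> \<epsilon>\<^sup>2 * (s2 * nq u - nq (M u))"
      by (simp add: algebra_simps)
    moreover have "ip (M vs) (M u) = ip (M (M vs)) u" by (simp add: symM)
    ultimately show "2 * \<epsilon> * ip (M (M vs)) u \<le> \<epsilon>\<^sup>2 * (s2 * nq u - nq (M u))" by simp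
  qed
  have claim3: "M (M vs) i = s2 * vs i" if "i < n" for i
  proof -
    define c where "c = ip (M (M vs)) vs"
    define u where "u = (\<lambda>i. M (M vs) i - c * vs i)"
    have us: "(\<Sum>i<n. u i) = 0"
      using vs_sum by (simp add: u_def sum_subtractf Msum sum_distrib_left[symmetric])
    have ipvv: "ip vs vs = 1" using vs_nq nq_ip by simp
    have uo: "ip u vs = 0"
    proof -
      have "ip u vs = ip (M (M vs)) vs - c * ip vs vs"
        by (simp add: u_def ip_def sum_subtractf sum_distrib_left algebra_simps)
      then show ?thesis using ipvv c_def by simp
    qed
    have A: "ip (M (M vs)) u = 0" by (rule claim2[OF us uo])
    have "ip u u = ip (M (M vs)) u - c * ip vs u"
      by (simp add: u_def ip_def sum_subtractf sum_distrib_left algebra_simps)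
    also have "\<dots> = 0" using A uo ip_comm[of vs u] by simp
    finally have "nq u = 0" using nq_ip by simp
    then have "u i = 0" using nq_zero that by blast
    moreover have "c = s2"
    proof -
      have "c = ip (M vs) (M vs)" unfolding c_def by (rule symM)
      then show ?thesis using nq_ip s2_def by simp
    qed
    ultimately show ?thesis by (simp add: u_def)
  qed
  define \<sigma> where "\<sigma> = sqrt s2"
  have \<sigma>0: "0 \<le> \<sigma>" using s2_0 by (simp add: \<sigma>_def)
  have \<sigma>2: "\<sigma>\<^sup>2 = s2" using s2_0 by (simp add: \<sigma>_def)
  have vs_nz: "\<exists>i<n. vs i \<noteq> 0"
  proof (rule ccontr)
    assume "\<not> (\<exists>i<n. vs i \<noteq> 0)"
    then have "nq vs = 0" by (simp add: nq_def)
    then show False using vs_nq by simp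
  qed
  have claim4: "\<exists>e. is_eigenvalue W n e \<and> e \<noteq> 1 \<and> \<bar>e\<bar> = \<sigma>"
  proof (cases "\<forall>i<n. M vs i = \<sigma> * vs i")
    case True
    have T2: "\<forall>i<n. (\<Sum>j<n. W i j * vs j) = \<sigma> * vs i" using True unfolding M_def .
    have ev: "is_eigenvalue W n \<sigma>"
      unfolding is_eigenvalue_def
    proof (rule exI[of _ vs])
      show "(\<exists>i<n. vs i \<noteq> 0) \<and> (\<forall>i<n. (\<Sum>j<n. W i j * vs j) = \<sigma> * vs i)"
        using vs_nz T2 by (rule conjI)
    qed
    have "\<sigma> \<noteq> 1"
    proof
      assume s1: "\<sigma> = 1"
      have A: "\<forall>i<n. (\<Sum>j<n. W i j * vs j) = vs i"
      proof (intro allI impI)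
        fix i assume i: "i < n"
        have "(\<Sum>j<n. W i j * vs j) = \<sigma> * vs i" using T2 i by blast
        then show "(\<Sum>j<n. W i j * vs j) = vs i" using s1 by simp
      qed
      have B: "\<forall>v. (\<forall>i<n. (\<Sum>j<n. W i j * v j) = v i) \<longrightarrow> (\<forall>i<n. \<forall>j<n. v i = v j)"
        using simp1[unfolded simple_eigenvalue_one_def] by (rule conjunct2)
      have eq: "\<forall>i<n. \<forall>j<n. vs i = vs j" using mp[OF spec[OF B, of vs] A] .
      have n0: "0 < n" using n2 by simp
      have "(\<Sum>i<n. vs i) = (\<Sum>i<n. vs 0)"
      proof (rule sum.cong)
        fix x assume "x \<in> {..<n}"
        then show "vs x = vs 0" using eq[rule_format, of x 0] n0 by simp
      qed simp
      then have "real n * vs 0 = 0" using vs_sum by simp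
      then have z: "vs 0 = 0" using n2 by simp
      have "\<forall>i<n. vs i = 0"
      proof (intro allI impI)
        fix i assume i: "i < n"
        show "vs i = 0" using eq[rule_format, of i 0] i n2 z by simp
      qed
      then show False using vs_nz by blast
    qed
    then show ?thesis using ev \<sigma>0 by auto
  next
    case False
    define w where "w = (\<lambda>i. M vs i - \<sigma> * vs i)"
    have wnz: "\<exists>i<n. w i \<noteq> 0" using False by (auto simp: w_def)
    have "\<forall>i<n. (\<Sum>j<n. W i j * w j) = (- \<sigma>) * w i"
    proof (intro allI impI)
      fix i assume i: "i < n"
      have "(\<Sum>j<n. W i j * w j) = M (M vs) i - \<sigma> * M vs i"
        by (simp add: w_def M_def right_diff_distrib sum_subtractf sum_distrib_left mult_ac)
      also have "\<dots> = \<sigma>\<^sup>2 * vs i - \<sigma> * M vs i" using claim3[OF i] \<sigma>2 by simp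
      also have "\<dots> = (- \<sigma>) * w i" by (simp add: w_def power2_eq_square algebra_simps)
      finally show "(\<Sum>j<n. W i j * w j) = (- \<sigma>) * w i" .
    qed
    then have ev: "is_eigenvalue W n (- \<sigma>)" unfolding is_eigenvalue_def using wnz by blast
    moreover have "- \<sigma> \<noteq> 1" using \<sigma>0 by simp
    ultimately show ?thesis using \<sigma>0 by (intro exI[of _ "- \<sigma>"]) auto
  qed
  then obtain e where e: "is_eigenvalue W n e" "e \<noteq> 1" "\<bar>e\<bar> = \<sigma>" by blast
  have "finite {e. is_eigenvalue W n e \<and> e \<noteq> 1}"
    using fin by (rule finite_subset[rotated]) auto
  then have finA: "finite (abs ` {e. is_eigenvalue W n e \<and> e \<noteq> 1})" by (rule finite_imageI)
  have "\<sigma> \<le> second_eig_mag W n"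
    unfolding second_eig_mag_def using e by (intro Max_ge[OF finA]) force
  then have "s2 \<le> (second_eig_mag W n)\<^sup>2"
    using \<sigma>2 \<sigma>0 by (metis power_mono)
  then have "s2 * nq v \<le> (second_eig_mag W n)\<^sup>2 * nq v"
    using nq_nonneg by (rule mult_right_mono)
  then have "nq (M v) \<le> (second_eig_mag W n)\<^sup>2 * nq v" using claim1[OF v0] by linarith
  then show ?thesis by (simp add: nq_def M_def)
qed

lemma eig_finite: "finite {e. is_eigenvalue W n e}"
proof -
  let ?A = "mat n n (\<lambda>(i,j). W i j) :: real mat"
  have A: "?A \<in> carrier_mat n n" by simp
  have "{e. is_eigenvalue W n e} \<subseteq> spectrum ?A"
  proof
    fix e assume "e \<in> {e. is_eigenvalue W n e}"
    then obtain v where v: "\<exists>i<n. v i \<noteq> 0" "\<forall>i<n. (\<Sum>j<n. W i j * v j) = e * v i"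
      unfolding is_eigenvalue_def by auto
    have "eigenvector ?A (vec n v) e"
      unfolding eigenvector_def using v
      by (auto simp: scalar_prod_def atLeast0LessThan mult_mat_vec_def row_def vec_eq_iff)
    then show "e \<in> spectrum ?A" unfolding spectrum_def eigenvalue_def by auto
  qed
  then show ?thesis using card_finite_spectrum(1)[OF A] finite_subset by blast
qed
definition sq :: "nat \<Rightarrow> (nat \<Rightarrow> 'a::real_normed_vector) \<Rightarrow> real" where
  "sq n y = (\<Sum>i<n. (norm (y i))\<^sup>2)"

definition dev :: "nat \<Rightarrow> (nat \<Rightarrow> 'a::real_normed_vector) \<Rightarrow> real" where
  "dev n y = sq n (\<lambda>i. y i - avg n y)"

lemma sq_nonneg: "0 \<le> sq n y" by (simp add: sq_def sum_nonneg)

lemma snorm_sq: "snorm n y = sqrt (sq n y)" by (simp add: snorm_def sq_def)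

lemma snorm_nonneg: "0 \<le> snorm n y" by (simp add: snorm_def sum_nonneg)

lemma snorm_sq2: "(snorm n y)\<^sup>2 = sq n y" by (simp add: snorm_sq sq_nonneg)

lemma snorm_L2: "snorm n y = L2_set (\<lambda>i. norm (y i)) {..<n}"
  by (simp add: snorm_def L2_set_def)

lemma snorm_add: "snorm n (\<lambda>i. a i + b i) \<le> snorm n a + snorm n b"
proof -
  have "snorm n (\<lambda>i. a i + b i) \<le> L2_set (\<lambda>i. norm (a i) + norm (b i)) {..<n}"
    unfolding snorm_L2 by (rule L2_set_mono) (auto intro: norm_triangle_ineq)
  also have "\<dots> \<le> snorm n a + snorm n b"
    unfolding snorm_L2 by (rule L2_set_triangle_ineq)
  finally show ?thesis .
qed

lemma snorm_minus: "snorm n (\<lambda>i. - a i) = snorm n a" by (simp add: snorm_def)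

lemma snorm_diff: "snorm n (\<lambda>i. a i - b i) \<le> snorm n a + snorm n b"
  using snorm_add[of n a "\<lambda>i. - b i"] by (simp add: snorm_minus)

lemma mix_lin: "mix W n (\<lambda>i. a i - b i) = (\<lambda>i. mix W n a i - mix W n b i)"
  by (simp add: mix_def scaleR_diff_right sum_subtractf)

lemma mixpow_lin: "(mix W n ^^ t) (\<lambda>i. a i - b i) = (\<lambda>i. (mix W n ^^ t) a i - (mix W n ^^ t) b i)"
  by (induction t) (simp_all add: mix_lin)

lemma avg_lin: "avg n (\<lambda>i. a i - c *\<^sub>R b i) = avg n a - c *\<^sub>R avg n b"
  by (simp add: avg_def sum_subtractf scaleR_sum_right[symmetric] scaleR_diff_right)

context
  fixes W :: "nat \<Rightarrow> nat \<Rightarrow> real" and n :: nat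
  assumes sym: "\<forall>i<n. \<forall>j<n. W i j = W j i" and rows: "\<forall>i<n. (\<Sum>j<n. W i j) = 1"
    and simp1: "simple_eigenvalue_one W n" and fin: "finite {e. is_eigenvalue W n e}"
    and b1: "second_eig_mag W n \<le> 1" and b0: "0 \<le> second_eig_mag W n" and n1: "1 \<le> n"
begin

lemma colsum: "j < n \<Longrightarrow> (\<Sum>i<n. W i j) = 1"
proof -
  assume j: "j < n"
  have "(\<Sum>i<n. W i j) = (\<Sum>i<n. W j i)" using sym j by (intro sum.cong) auto
  then show ?thesis using rows j by simp
qed

lemma mix_shift: "i < n \<Longrightarrow> mix W n (\<lambda>j. y j - c) i = mix W n y i - c"
proof -
  assume i: "i < n"
  have "mix W n (\<lambda>j. y j - c) i = mix W n y i - (\<Sum>j<n. W i j) *\<^sub>R c"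
    by (simp add: mix_def scaleR_diff_right sum_subtractf scaleR_sum_left)
  then show ?thesis using rows i by simp
qed

lemma avg_mix: "avg n (mix W n y) = avg n y"
proof -
  have "(\<Sum>i<n. mix W n y i) = (\<Sum>i<n. \<Sum>j<n. W i j *\<^sub>R y j)" by (simp add: mix_def)
  also have "\<dots> = (\<Sum>j<n. \<Sum>i<n. W i j *\<^sub>R y j)" by (rule sum.swap)
  also have "\<dots> = (\<Sum>j<n. (\<Sum>i<n. W i j) *\<^sub>R y j)" by (simp add: scaleR_sum_left)
  also have "\<dots> = (\<Sum>j<n. y j)" using colsum by simp
  finally show ?thesis by (simp add: avg_def)
qed

lemma avg_mixpow: "avg n ((mix W n ^^ t) y) = avg n y"
  by (induction t) (simp_all add: avg_mix)

lemma sum_dev0: "(\<Sum>i<n. y i - avg n y) = 0"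
proof -
  have "(\<Sum>i<n. y i - avg n y) = (\<Sum>i<n. y i) - real n *\<^sub>R avg n y" by (simp add: sum_subtractf sum_constant_scaleR)
  also have "real n *\<^sub>R avg n y = (\<Sum>i<n. y i)" using n1 by (simp add: avg_def)
  finally show ?thesis by simp
qed

lemma pythag:
  fixes z :: "nat \<Rightarrow> 'a::real_inner"
  assumes z0: "(\<Sum>i<n. z i) = 0"
  shows "sq n (\<lambda>i. z i + c) = sq n z + real n * (norm c)\<^sup>2"
proof -
  have "sq n (\<lambda>i. z i + c) = (\<Sum>i<n. (norm (z i))\<^sup>2 + 2 * (z i \<bullet> c) + (norm c)\<^sup>2)"
    unfolding sq_def by (rule sum.cong) (simp_all add: power2_norm_eq_inner inner_add_left inner_add_right inner_commute)
  also have "\<dots> = sq n z + 2 * ((\<Sum>i<n. z i) \<bullet> c) + real n * (norm c)\<^sup>2"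
    by (simp add: sum.distrib sq_def inner_sum_left sum_distrib_left)
  finally show ?thesis using z0 by simp
qed

lemma spec_vec:
  fixes z :: "nat \<Rightarrow> 'a::euclidean_space"
  assumes z0: "(\<Sum>i<n. z i) = 0"
  shows "sq n (mix W n z) \<le> (second_eig_mag W n)\<^sup>2 * sq n z"
proof -
  have nsq: "(norm x)\<^sup>2 = (\<Sum>b\<in>Basis. (x \<bullet> b)\<^sup>2)" for x :: 'a
    unfolding power2_norm_eq_inner by (subst euclidean_inner) (simp add: power2_eq_square)
  have mixb: "mix W n z i \<bullet> b = (\<Sum>j<n. W i j * (z j \<bullet> b))" for i b
    by (simp add: mix_def inner_sum_left)
  have zb: "(\<Sum>j<n. z j \<bullet> b) = 0" for b
    using z0 by (simp add: inner_sum_left[symmetric])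
  have "sq n (mix W n z) = (\<Sum>i<n. \<Sum>b\<in>Basis. (mix W n z i \<bullet> b)\<^sup>2)"
    by (simp add: sq_def nsq)
  also have "\<dots> = (\<Sum>b\<in>Basis. \<Sum>i<n. (\<Sum>j<n. W i j * (z j \<bullet> b))\<^sup>2)"
    by (subst sum.swap) (simp add: mixb)
  also have "\<dots> \<le> (\<Sum>b\<in>Basis. (second_eig_mag W n)\<^sup>2 * (\<Sum>i<n. (z i \<bullet> b)\<^sup>2))"
    by (rule sum_mono, rule scalar_spec[OF sym rows simp1 fin zb])
  also have "\<dots> = (second_eig_mag W n)\<^sup>2 * (\<Sum>b\<in>Basis. \<Sum>i<n. (z i \<bullet> b)\<^sup>2)"
    by (simp add: sum_distrib_left)
  also have "\<dots> = (second_eig_mag W n)\<^sup>2 * (\<Sum>i<n. \<Sum>b\<in>Basis. (z i \<bullet> b)\<^sup>2)"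
    by (rule arg_cong[where f="\<lambda>x. (second_eig_mag W n)\<^sup>2 * x"], rule sum.swap)
  also have "\<dots> = (second_eig_mag W n)\<^sup>2 * sq n z"
    by (simp add: sq_def nsq)
  finally show ?thesis .
qed

lemma dev_mix:
  fixes y :: "nat \<Rightarrow> 'a::euclidean_space"
  shows "dev n (mix W n y) \<le> (second_eig_mag W n)\<^sup>2 * dev n y"
proof -
  have "dev n (mix W n y) = sq n (mix W n (\<lambda>j. y j - avg n y))"
    unfolding dev_def avg_mix sq_def by (rule sum.cong) (simp_all add: mix_shift)
  also have "\<dots> \<le> (second_eig_mag W n)\<^sup>2 * sq n (\<lambda>j. y j - avg n y)"
    by (rule spec_vec[OF sum_dev0])
  finally show ?thesis by (simp add: dev_def)
qed

lemma dev_mixpow: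
  fixes y :: "nat \<Rightarrow> 'a::euclidean_space"
  shows "dev n ((mix W n ^^ t) y) \<le> (second_eig_mag W n) ^ (2 * t) * dev n y"
proof (induction t)
  case 0 then show ?case by simp
next
  case (Suc t)
  have "dev n ((mix W n ^^ Suc t) y) \<le> (second_eig_mag W n)\<^sup>2 * dev n ((mix W n ^^ t) y)"
    using dev_mix by simp
  also have "\<dots> \<le> (second_eig_mag W n)\<^sup>2 * ((second_eig_mag W n) ^ (2 * t) * dev n y)"
    by (rule mult_left_mono[OF Suc.IH]) simp
  also have "\<dots> = (second_eig_mag W n) ^ (2 * Suc t) * dev n y"
    by (simp add: power_add power2_eq_square mult_ac)
  finally show ?case .
qed

lemma sq_split:
  fixes y :: "nat \<Rightarrow> 'a::real_inner"
  shows "sq n y = dev n y + real n * (norm (avg n y))\<^sup>2"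
proof -
  have "sq n y = sq n (\<lambda>i. (y i - avg n y) + avg n y)" by simp
  also have "\<dots> = dev n y + real n * (norm (avg n y))\<^sup>2"
    unfolding dev_def by (rule pythag[OF sum_dev0])
  finally show ?thesis .
qed

lemma dev_le_sq:
  fixes y :: "nat \<Rightarrow> 'a::real_inner"
  shows "dev n y \<le> sq n y"
  using sq_split[of y] by simp

lemma sq_mix:
  fixes y :: "nat \<Rightarrow> 'a::euclidean_space"
  shows "sq n (mix W n y) \<le> sq n y"
proof -
  have b2: "(second_eig_mag W n)\<^sup>2 \<le> 1" using b0 b1 by (simp add: power_le_one)
  have "sq n (mix W n y) = dev n (mix W n y) + real n * (norm (avg n y))\<^sup>2"
    using sq_split[of "mix W n y"] by (simp add: avg_mix)
  also have "\<dots> \<le> (second_eig_mag W n)\<^sup>2 * dev n y + real n * (norm (avg n y))\<^sup>2"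
    using dev_mix by simp
  also have "\<dots> \<le> dev n y + real n * (norm (avg n y))\<^sup>2"
  proof -
    have "(second_eig_mag W n)\<^sup>2 * dev n y \<le> 1 * dev n y"
      by (rule mult_right_mono[OF b2]) (simp add: dev_def sq_nonneg)
    then show ?thesis by simp
  qed
  also have "\<dots> = sq n y" using sq_split[of y] by simp
  finally show ?thesis .
qed

lemma sq_mixpow:
  fixes y :: "nat \<Rightarrow> 'a::euclidean_space"
  shows "sq n ((mix W n ^^ t) y) \<le> sq n y"
proof (induction t)
  case 0 then show ?case by simp
next
  case (Suc t) then show ?case using sq_mix[of "(mix W n ^^ t) y"] by simp
qed

end

lemma young:
  fixes a b :: "'a::real_inner"
  assumes e: "0 < \<epsilon>"
  shows "(norm (a + b))\<^sup>2 \<le> (1 + \<epsilon>) * (norm a)\<^sup>2 + (1 + 1 / \<epsilon>) * (norm b)\<^sup>2"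
proof -
  have "(norm (a + b))\<^sup>2 \<le> (norm a + norm b)\<^sup>2"
    by (rule power_mono[OF norm_triangle_ineq]) simp
  also have "\<dots> = (norm a)\<^sup>2 + 2 * (norm a * norm b) + (norm b)\<^sup>2" by (simp add: power2_sum)
  also have "2 * (norm a * norm b) \<le> \<epsilon> * (norm a)\<^sup>2 + (norm b)\<^sup>2 / \<epsilon>"
  proof -
    have "0 \<le> (\<epsilon> * norm a - norm b)\<^sup>2 / \<epsilon>" using e by simp
    also have "(\<epsilon> * norm a - norm b)\<^sup>2 / \<epsilon> = \<epsilon> * (norm a)\<^sup>2 - 2 * (norm a * norm b) + (norm b)\<^sup>2 / \<epsilon>"
      using e by (simp add: power2_diff field_simps power2_eq_square)
    finally show ?thesis by simp
  qed
  finally show ?thesis by (simp add: algebra_simps)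
qed

lemma sum_sq_le_card:
  fixes a :: "nat \<Rightarrow> real"
  shows "(\<Sum>i<n. a i)\<^sup>2 \<le> real n * (\<Sum>i<n. (a i)\<^sup>2)"
  using Cauchy_Schwarz_ineq_sum[of "\<lambda>i. 1" a "{..<n}"] by simp

lemma rec_bound:
  fixes e :: "nat \<Rightarrow> real"
  assumes st: "\<And>k. e (Suc k) \<le> q * (e k + 2 * U)" and q0: "0 \<le> q" and q1: "q < 1" and U0: "0 \<le> U"
    and e0: "0 \<le> e 0"
  shows "e k \<le> e 0 + 2 * q * U / (1 - q)"
proof (induction k)
  case 0 then show ?case using q0 q1 U0 by simp
next
  case (Suc k)
  have "e (Suc k) \<le> q * (e k + 2 * U)" by (rule st)
  also have "\<dots> \<le> q * (e 0 + 2 * q * U / (1 - q) + 2 * U)"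
    using Suc.IH q0 by (intro mult_left_mono) auto
  also have "\<dots> = q * e 0 + 2 * q * U / (1 - q)"
    using q1 by (simp add: field_simps)
  also have "\<dots> \<le> e 0 + 2 * q * U / (1 - q)"
    using q1 e0 q0 mult_right_mono[of q 1 "e 0"] by simp
  finally show ?case .
qed

lemma sq_rec_bound:
  fixes e :: "nat \<Rightarrow> real"
  assumes st: "\<And>k. e (Suc k) \<le> c * e k + B" and c0: "0 \<le> c" and c1: "c < 1" and B0: "0 \<le> B"
  shows "e k \<le> c ^ k * e 0 + B / (1 - c)"
proof (induction k)
  case 0
  show ?case using c1 B0 by simp
next
  case (Suc k)
  have "e (Suc k) \<le> c * e k + B" by (rule st)
  also have "\<dots> \<le> c * (c ^ k * e 0 + B / (1 - c)) + B"
    using Suc.IH c0 by (simp add: mult_left_mono)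
  also have "\<dots> = c ^ Suc k * e 0 + B / (1 - c)"
    using c1 by (simp add: field_simps)
  finally show ?case .
qed

lemma core:
  fixes W :: "nat \<Rightarrow> nat \<Rightarrow> real" and n t :: nat
    and f :: "nat \<Rightarrow> 'a::euclidean_space \<Rightarrow> real" and g :: "nat \<Rightarrow> 'a \<Rightarrow> 'a"
    and \<mu> Lc :: "nat \<Rightarrow> real" and \<alpha> \<beta> :: real
    and s0 xstar :: 'a and ustar :: "nat \<Rightarrow> 'a"
  assumes n_pos: "1 \<le> n" and t_pos: "1 \<le> t"
    and W_sds: "symmetric_doubly_stochastic W n"
    and W_diag: "\<forall>i<n. 0 < W i i"
    and W_conn: "connected_network W n"
    and W_one: "simple_eigenvalue_one W n"
    and W_others: "\<forall>e. is_eigenvalue W n e \<and> e \<noteq> 1 \<longrightarrow> -1 < e \<and> e < 1"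
    and beta_def: "\<beta> = second_eig_mag W n"
    and beta_bds: "0 < \<beta>" "\<beta> < 1"
    and grad: "\<forall>i<n. is_gradient (f i) (g i)"
    and mu_pos: "\<forall>i<n. 0 < \<mu> i"
    and sconv: "\<forall>i<n. strongly_convex (\<mu> i) (f i)"
    and lips: "\<forall>i<n. (Lc i)-lipschitz_on UNIV (g i)"
    and ustar_min: "\<forall>i<n. \<forall>z. f i (ustar i) \<le> f i z"
    and xstar_min: "\<forall>z. (\<Sum>i<n. f i xstar) \<le> (\<Sum>i<n. f i z)"
    and alpha_pos: "0 < \<alpha>"
    and alpha_le: "\<alpha> \<le> min (1 / Max (Lc ` {..<n}))
                        (2 / ((\<Sum>i<n. \<mu> i) / real n + (\<Sum>i<n. Lc i) / real n))"
  defines "L \<equiv> Max (Lc ` {..<n})"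
    and "mu_bar \<equiv> (\<Sum>i<n. \<mu> i) / real n"
    and "L_bar \<equiv> (\<Sum>i<n. Lc i) / real n"
    and "c2 \<equiv> 2 * ((\<Sum>i<n. \<mu> i) / real n) * ((\<Sum>i<n. Lc i) / real n) / ((\<Sum>i<n. \<mu> i) / real n + (\<Sum>i<n. Lc i) / real n)"
    and "\<gamma> \<equiv> Min ((\<lambda>i. \<mu> i * Lc i / (\<mu> i + Lc i)) ` {..<n})"
    and "\<nu> \<equiv> 2 * \<alpha> * Min ((\<lambda>i. \<mu> i * Lc i / (\<mu> i + Lc i)) ` {..<n})"
    and "D \<equiv> snorm n (\<lambda>i. s0 - ustar i) + (2 * \<alpha> * Min ((\<lambda>i. \<mu> i * Lc i / (\<mu> i + Lc i)) ` {..<n}) + 4) / (2 * \<alpha> * Min ((\<lambda>i. \<mu> i * Lc i / (\<mu> i + Lc i)) ` {..<n})) * snorm n ustar"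
    and "xbar \<equiv> (\<lambda>k. avg n (near_dgd_x W n t \<alpha> g (\<lambda>i. s0) k))"
  shows "(\<forall>\<delta>>0. \<forall>k.
           (norm (xbar (Suc k) - xstar))\<^sup>2
             \<le> (1 - \<alpha> * c2 + \<alpha> * \<delta> - \<alpha>\<^sup>2 * \<delta> * c2) * (norm (xbar k - xstar))\<^sup>2
               + \<alpha> * (\<alpha> + 1 / \<delta>) * D\<^sup>2 * L\<^sup>2 * \<beta> ^ (2 * t))
      \<and> (\<alpha> * c2 < 1 \<longrightarrow>
           (let \<delta> = c2 / (2 * (1 - \<alpha> * c2));
                c1 = sqrt (1 - \<alpha> * c2 + \<alpha> * \<delta> - \<alpha>\<^sup>2 * \<delta> * c2)
            in c1 = sqrt (1 - \<alpha> * c2 / 2) \<and> 0 < c1 \<and> c1 < 1 \<and>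
               (\<forall>k. norm (xbar k - xstar)
                      \<le> c1 ^ k * norm (xbar 0 - xstar)
                        + L * D * \<beta> ^ t / c2 * sqrt (2 * (2 - \<alpha> * c2)))))"
proof -
  have c2_eq: "c2 = 2 * mu_bar * L_bar / (mu_bar + L_bar)" unfolding c2_def mu_bar_def L_bar_def ..
  have nu_eq: "\<nu> = 2 * \<alpha> * \<gamma>" unfolding \<nu>_def \<gamma>_def ..
  have D_eq: "D = snorm n (\<lambda>i. s0 - ustar i) + (\<nu> + 4) / \<nu> * snorm n ustar" unfolding D_def \<nu>_def ..
  have n0: "0 < n" using n_pos by simp
  have rn: "0 < real n" using n0 by simp
  have sym: "\<forall>i<n. \<forall>j<n. W i j = W j i" and rows: "\<forall>i<n. (\<Sum>j<n. W i j) = 1"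
    using W_sds unfolding symmetric_doubly_stochastic_def by auto
  have fin: "finite {e. is_eigenvalue W n e}" by (rule eig_finite)
  have b1: "second_eig_mag W n \<le> 1" and b0: "0 \<le> second_eig_mag W n"
    using beta_bds beta_def by auto
  note N = colsum[OF sym rows W_one fin b1 b0 n_pos] avg_mixpow[OF sym rows W_one fin b1 b0 n_pos]
    dev_mixpow[OF sym rows W_one fin b1 b0 n_pos] dev_le_sq[OF sym rows W_one fin b1 b0 n_pos]
    sq_mixpow[OF sym rows W_one fin b1 b0 n_pos] avg_mix[OF sym rows W_one fin b1 b0 n_pos]
  have low: "\<And>x y. f i x + g i x \<bullet> (y - x) + \<mu> i / 2 * (norm (y - x))\<^sup>2 \<le> f i y" if "i < n" for i
    using sc_lower[of "\<mu> i" "f i" "g i"] sconv grad that by blast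
  have up: "\<And>x y. f i y \<le> f i x + g i x \<bullet> (y - x) + Lc i / 2 * (norm (y - x))\<^sup>2" if "i < n" for i
    using lip_upper[of "f i" "g i" "Lc i"] lips grad that by blast
  have Lc0: "0 \<le> Lc i" if "i < n" for i using lips that unfolding lipschitz_on_def by blast
  have mL: "\<mu> i \<le> Lc i" if "i < n" for i by (rule mu_le_L[OF low[OF that] up[OF that]])
  have LcL: "Lc i \<le> L" if "i < n" for i unfolding L_def using that by (intro Max_ge) auto
  have Lpos: "0 < L" using LcL[OF n0] mL[OF n0] mu_pos n0 by force
  have aL: "\<alpha> * L \<le> 1" using alpha_le Lpos unfolding L_def[symmetric] by (simp add: field_simps)
  have gu0: "g i (ustar i) = 0" if "i < n" for i
    by (rule min_grad_zero[OF up[OF that] Lc0[OF that]]) (use ustar_min that in blast)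
  have gam_le: "\<gamma> \<le> \<mu> i * Lc i / (\<mu> i + Lc i)" if "i < n" for i
    unfolding \<gamma>_def using that by (intro Min_le) auto
  have gam_pos: "0 < \<gamma>"
  proof -
    have "\<forall>x\<in>(\<lambda>i. \<mu> i * Lc i / (\<mu> i + Lc i)) ` {..<n}. 0 < x"
    proof
      fix x assume "x \<in> (\<lambda>i. \<mu> i * Lc i / (\<mu> i + Lc i)) ` {..<n}"
      then obtain i where i: "i < n" and x: "x = \<mu> i * Lc i / (\<mu> i + Lc i)" by auto
      have "0 < \<mu> i" using mu_pos i by simp
      moreover have "0 < Lc i" using mL[OF i] \<open>0 < \<mu> i\<close> by linarith
      ultimately show "0 < x" using x by simp
    qed
    then show ?thesis unfolding \<gamma>_def using n0 by (subst Min_gr_iff) auto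
  qed
  have nu_pos: "0 < \<nu>" unfolding nu_eq using gam_pos alpha_pos by simp
  have nu_le: "\<nu> \<le> 1"
  proof -
    have m0: "0 < \<mu> 0" using mu_pos n0 by simp
    have L0: "0 < Lc 0" using mL[OF n0] m0 by linarith
    have "\<alpha> * Lc 0 \<le> 1" using aL LcL[OF n0] alpha_pos
      by (meson dual_order.trans mult_left_mono less_imp_le)
    have "\<nu> \<le> 2 * \<alpha> * (\<mu> 0 * Lc 0 / (\<mu> 0 + Lc 0))"
      unfolding nu_eq by (rule mult_left_mono[OF gam_le[OF n0]]) (use alpha_pos in simp)
    also have "\<dots> = (\<alpha> * Lc 0) * (2 * \<mu> 0 / (\<mu> 0 + Lc 0))" by (simp add: field_simps)
    also have "\<dots> \<le> 1 * 1"
    proof (rule mult_mono)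
      show "\<alpha> * Lc 0 \<le> 1" by fact
      show "2 * \<mu> 0 / (\<mu> 0 + Lc 0) \<le> 1" using mL[OF n0] m0 L0 by (simp add: field_simps)
    qed (use m0 L0 alpha_pos in auto)
    finally show ?thesis by simp
  qed
  have agent: "(norm (z - \<alpha> *\<^sub>R g i z - ustar i))\<^sup>2 \<le> (1 - \<nu>) * (norm (z - ustar i))\<^sup>2" if i: "i < n" for i z
  proof -
    have m0: "0 < \<mu> i" using mu_pos i by simp
    have L0: "0 < Lc i" using mL[OF i] m0 by linarith
    have cc: "\<mu> i * Lc i * (norm (z - ustar i))\<^sup>2 + (norm (g i z - g i (ustar i)))\<^sup>2 \<le> (\<mu> i + Lc i) * ((g i z - g i (ustar i)) \<bullet> (z - ustar i))"
      by (rule coco[OF low[OF i] up[OF i] mL[OF i]])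
    have a2: "\<alpha> \<le> 2 / (\<mu> i + Lc i)"
    proof -
      have "\<alpha> * Lc i \<le> 1" using aL LcL[OF i] alpha_pos
        by (meson dual_order.trans mult_left_mono less_imp_le)
      then have "\<alpha> * (\<mu> i + Lc i) \<le> 2" using mL[OF i] alpha_pos
        by (smt (verit) mult_left_mono distrib_left)
      then show ?thesis using m0 L0 by (simp add: field_simps)
    qed
    have "(norm ((z - \<alpha> *\<^sub>R g i z) - (ustar i - \<alpha> *\<^sub>R g i (ustar i))))\<^sup>2 \<le> (1 - \<alpha> * (2 * \<mu> i * Lc i / (\<mu> i + Lc i))) * (norm (z - ustar i))\<^sup>2"
      by (rule contraction[OF cc _ alpha_pos a2]) (use m0 L0 in simp)
    also have "\<dots> \<le> (1 - \<nu>) * (norm (z - ustar i))\<^sup>2"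
    proof (rule mult_right_mono)
      have "\<nu> \<le> 2 * \<alpha> * (\<mu> i * Lc i / (\<mu> i + Lc i))"
        unfolding nu_eq by (rule mult_left_mono[OF gam_le[OF i]]) (use alpha_pos in simp)
      also have "\<dots> = \<alpha> * (2 * \<mu> i * Lc i / (\<mu> i + Lc i))" by simp
      finally have "\<nu> \<le> \<alpha> * (2 * \<mu> i * Lc i / (\<mu> i + Lc i))" .
      then show "1 - \<alpha> * (2 * \<mu> i * Lc i / (\<mu> i + Lc i)) \<le> 1 - \<nu>" by simp
    qed simp
    finally show ?thesis using gu0[OF i] by simp
  qed
  define y where "y = near_dgd_y W n t \<alpha> g (\<lambda>i. s0)"
  define x where "x = (\<lambda>k. (mix W n ^^ t) (y k))"
  have xdef: "near_dgd_x W n t \<alpha> g (\<lambda>i. s0) k = x k" for k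
    by (simp add: near_dgd_x_def x_def y_def)
  have ystep: "y (Suc k) = (\<lambda>i. x k i - \<alpha> *\<^sub>R g i (x k i))" for k
    by (simp add: y_def x_def Let_def)
  have y0: "y 0 = (\<lambda>i. s0)" by (simp add: y_def)
  have xbar_y: "xbar k = avg n (y k)" for k
    unfolding xbar_def xdef x_def by (rule N(2))
  define U where "U = snorm n ustar"
  define e where "e = (\<lambda>k. snorm n (\<lambda>i. y k i - ustar i))"
  define q where "q = sqrt (1 - \<nu>)"
  have U0: "0 \<le> U" by (simp add: U_def snorm_nonneg)
  have q0: "0 \<le> q" using nu_le by (simp add: q_def)
  have q1: "q < 1" using nu_pos nu_le by (simp add: q_def)
  have q2: "q\<^sup>2 = 1 - \<nu>" using nu_le by (simp add: q_def)
  have estep: "e (Suc k) \<le> q * (e k + 2 * U)" for k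
  proof -
    have "sq n (\<lambda>i. y (Suc k) i - ustar i) \<le> (1 - \<nu>) * sq n (\<lambda>i. x k i - ustar i)"
      unfolding ystep sq_def sum_distrib_left by (rule sum_mono) (simp add: agent)
    then have A: "e (Suc k) \<le> q * snorm n (\<lambda>i. x k i - ustar i)"
      unfolding e_def snorm_sq q_def using nu_le by (simp add: real_sqrt_mult[symmetric])
    have xs: "(\<lambda>i. x k i - ustar i) = (\<lambda>i. (mix W n ^^ t) (\<lambda>j. y k j - ustar j) i + ((mix W n ^^ t) ustar i - ustar i))"
      unfolding x_def mixpow_lin by (rule ext) simp
    have "snorm n (\<lambda>i. x k i - ustar i) \<le> snorm n ((mix W n ^^ t) (\<lambda>j. y k j - ustar j)) + snorm n (\<lambda>i. (mix W n ^^ t) ustar i - ustar i)"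
      unfolding xs by (rule snorm_add)
    also have "snorm n ((mix W n ^^ t) (\<lambda>j. y k j - ustar j)) \<le> e k"
      unfolding e_def snorm_sq by (rule real_sqrt_le_mono, rule N(5))
    also have "snorm n (\<lambda>i. (mix W n ^^ t) ustar i - ustar i) \<le> snorm n ((mix W n ^^ t) ustar) + U"
      unfolding U_def by (rule snorm_diff)
    also have "snorm n ((mix W n ^^ t) ustar) \<le> U"
      unfolding U_def snorm_sq by (rule real_sqrt_le_mono, rule N(5))
    finally have "snorm n (\<lambda>i. x k i - ustar i) \<le> e k + 2 * U" by simp
    then have "q * snorm n (\<lambda>i. x k i - ustar i) \<le> q * (e k + 2 * U)"
      using q0 by (rule mult_left_mono)
    with A show ?thesis by linarith
  qed
  have ebound: "e k \<le> e 0 + 2 * q * U / (1 - q)" for k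
    using rec_bound[where e=e and q=q and U=U, OF estep q0 q1 U0] by (simp add: e_def snorm_nonneg)
  have qbound: "2 * q / (1 - q) + 1 \<le> (\<nu> + 4) / \<nu>"
  proof -
    have "q\<^sup>2 \<le> (2 / (\<nu> + 2))\<^sup>2"
    proof -
      have "(1 - \<nu>) * (\<nu> + 2)\<^sup>2 \<le> 4" using nu_pos nu_le
        by (simp add: power2_eq_square algebra_simps)
      then have "q\<^sup>2 * (\<nu> + 2)\<^sup>2 \<le> 4" using q2 by simp
      then show ?thesis using nu_pos by (simp add: power_divide field_simps)
    qed
    then have qq: "q \<le> 2 / (\<nu> + 2)" using q0 nu_pos
      by (meson power2_le_imp_le divide_nonneg_nonneg less_imp_le add_nonneg_nonneg zero_le_numeral)
    then have "2 * q \<le> 4 / \<nu> * (1 - q)" using nu_pos q1 by (simp add: field_simps)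
    then have "2 * q / (1 - q) \<le> 4 / \<nu>" using q1 by (simp add: divide_le_eq mult.commute)
    then show ?thesis using nu_pos by (simp add: add_divide_distrib)
  qed
  have ybound: "snorm n (y k) \<le> D" for k
  proof -
    have "snorm n (y k) = snorm n (\<lambda>i. (y k i - ustar i) + ustar i)" by simp
    also have "\<dots> \<le> e k + U" unfolding e_def U_def by (rule snorm_add)
    also have "\<dots> \<le> e 0 + (2 * q / (1 - q) + 1) * U" using ebound[of k] by (simp add: algebra_simps)
    also have "\<dots> \<le> e 0 + (\<nu> + 4) / \<nu> * U" using mult_right_mono[OF qbound U0] by simp
    also have "\<dots> = D" by (simp add: D_eq e_def U_def y0)
    finally show ?thesis .
  qed
  have D0: "0 \<le> D" using ybound[of 0] snorm_nonneg[of n "y 0"] by linarith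
  define F where "F = (\<lambda>z. (\<Sum>i<n. f i z) / real n)"
  define G where "G = (\<lambda>z. avg n (\<lambda>i. g i z))"
  have Ginner: "G z \<bullet> d = (\<Sum>i<n. g i z \<bullet> d) / real n" for z d
    by (simp add: G_def avg_def inner_sum_left)
  have Flow: "F x' + G x' \<bullet> (y' - x') + mu_bar / 2 * (norm (y' - x'))\<^sup>2 \<le> F y'" for x' y'
  proof -
    have "(\<Sum>i<n. f i x' + g i x' \<bullet> (y' - x') + \<mu> i / 2 * (norm (y' - x'))\<^sup>2) \<le> (\<Sum>i<n. f i y')"
      by (rule sum_mono, rule low) simp
    moreover have "(\<Sum>i<n. f i x' + g i x' \<bullet> (y' - x') + \<mu> i / 2 * (norm (y' - x'))\<^sup>2)
      = (\<Sum>i<n. f i x') + (\<Sum>i<n. g i x' \<bullet> (y' - x')) + (\<Sum>i<n. \<mu> i) / 2 * (norm (y' - x'))\<^sup>2"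
      by (simp add: sum.distrib sum_divide_distrib[symmetric] sum_distrib_right)
    ultimately have "(\<Sum>i<n. f i x') + (\<Sum>i<n. g i x' \<bullet> (y' - x')) + (\<Sum>i<n. \<mu> i) / 2 * (norm (y' - x'))\<^sup>2 \<le> (\<Sum>i<n. f i y')"
      by simp
    then have "((\<Sum>i<n. f i x') + (\<Sum>i<n. g i x' \<bullet> (y' - x')) + (\<Sum>i<n. \<mu> i) / 2 * (norm (y' - x'))\<^sup>2) / real n \<le> (\<Sum>i<n. f i y') / real n"
      using rn by (simp add: divide_right_mono)
    then show ?thesis unfolding F_def Ginner mu_bar_def using rn by (simp add: add_divide_distrib)
  qed
  have Fup: "F y' \<le> F x' + G x' \<bullet> (y' - x') + L_bar / 2 * (norm (y' - x'))\<^sup>2" for x' y'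
  proof -
    have "(\<Sum>i<n. f i y') \<le> (\<Sum>i<n. f i x' + g i x' \<bullet> (y' - x') + Lc i / 2 * (norm (y' - x'))\<^sup>2)"
      by (rule sum_mono, rule up) simp
    moreover have "(\<Sum>i<n. f i x' + g i x' \<bullet> (y' - x') + Lc i / 2 * (norm (y' - x'))\<^sup>2)
      = (\<Sum>i<n. f i x') + (\<Sum>i<n. g i x' \<bullet> (y' - x')) + (\<Sum>i<n. Lc i) / 2 * (norm (y' - x'))\<^sup>2"
      by (simp add: sum.distrib sum_divide_distrib[symmetric] sum_distrib_right)
    ultimately have "(\<Sum>i<n. f i y') \<le> (\<Sum>i<n. f i x') + (\<Sum>i<n. g i x' \<bullet> (y' - x')) + (\<Sum>i<n. Lc i) / 2 * (norm (y' - x'))\<^sup>2"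
      by simp
    then have "(\<Sum>i<n. f i y') / real n \<le> ((\<Sum>i<n. f i x') + (\<Sum>i<n. g i x' \<bullet> (y' - x')) + (\<Sum>i<n. Lc i) / 2 * (norm (y' - x'))\<^sup>2) / real n"
      using rn by (simp add: divide_right_mono)
    then show ?thesis unfolding F_def Ginner L_bar_def using rn by (simp add: add_divide_distrib)
  qed
  have mub_pos: "0 < mu_bar" unfolding mu_bar_def using mu_pos n0
    by (intro divide_pos_pos sum_pos) auto
  have mLb: "mu_bar \<le> L_bar" by (rule mu_le_L[OF Flow Fup])
  have Lb0: "0 \<le> L_bar" using mub_pos mLb by simp
  have Gx0: "G xstar = 0"
    by (rule min_grad_zero[OF Fup Lb0]) (use xstar_min rn in \<open>simp add: F_def divide_right_mono\<close>)
  have c2_pos: "0 < c2" unfolding c2_eq using mub_pos mLb by simp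
  have a_c4: "\<alpha> \<le> 2 / (mu_bar + L_bar)" using alpha_le unfolding mu_bar_def L_bar_def by simp
  have contr: "(norm ((z - \<alpha> *\<^sub>R G z) - xstar))\<^sup>2 \<le> (1 - \<alpha> * c2) * (norm (z - xstar))\<^sup>2" for z
  proof -
    have cc: "mu_bar * L_bar * (norm (z - xstar))\<^sup>2 + (norm (G z - G xstar))\<^sup>2 \<le> (mu_bar + L_bar) * ((G z - G xstar) \<bullet> (z - xstar))"
      by (rule coco[OF Flow Fup mLb])
    have "(norm ((z - \<alpha> *\<^sub>R G z) - (xstar - \<alpha> *\<^sub>R G xstar)))\<^sup>2 \<le> (1 - \<alpha> * (2 * mu_bar * L_bar / (mu_bar + L_bar))) * (norm (z - xstar))\<^sup>2"
      by (rule contraction[OF cc _ alpha_pos a_c4]) (use mub_pos mLb in simp)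
    then show ?thesis using Gx0 unfolding c2_eq by simp
  qed
  have onestep: "(norm (xbar (Suc k) - xstar))\<^sup>2
             \<le> (1 - \<alpha> * c2 + \<alpha> * \<delta> - \<alpha>\<^sup>2 * \<delta> * c2) * (norm (xbar k - xstar))\<^sup>2
               + \<alpha> * (\<alpha> + 1 / \<delta>) * D\<^sup>2 * L\<^sup>2 * \<beta> ^ (2 * t)" if d0: "0 < \<delta>" for \<delta> k
  proof -
    define xb where "xb = xbar k"
    define Gk where "Gk = avg n (\<lambda>i. g i (x k i))"
    have xbx: "xb = avg n (x k)" unfolding xb_def xbar_y x_def by (simp add: N(2))
    have xs: "xbar (Suc k) = xb - \<alpha> *\<^sub>R Gk"
      unfolding xbar_y ystep avg_lin Gk_def xbx by simp
    define A where "A = (xb - \<alpha> *\<^sub>R G xb) - xstar"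
    define B where "B = \<alpha> *\<^sub>R (G xb - Gk)"
    have AB: "xbar (Suc k) - xstar = A + B" unfolding xs A_def B_def by (simp add: algebra_simps)
    have Ab: "(norm A)\<^sup>2 \<le> (1 - \<alpha> * c2) * (norm (xb - xstar))\<^sup>2" unfolding A_def by (rule contr)
    have GG: "G xb - Gk = (1 / real n) *\<^sub>R (\<Sum>i<n. g i xb - g i (x k i))"
      by (simp add: G_def Gk_def avg_def sum_subtractf scaleR_diff_right)
    have sn: "norm (\<Sum>i<n. g i xb - g i (x k i)) \<le> (\<Sum>i<n. L * norm (x k i - xb))"
    proof -
      have "norm (\<Sum>i<n. g i xb - g i (x k i)) \<le> (\<Sum>i<n. norm (g i xb - g i (x k i)))"
        by (rule norm_sum)
      also have "\<dots> \<le> (\<Sum>i<n. L * norm (x k i - xb))"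
      proof (rule sum_mono)
        fix i assume "i \<in> {..<n}"
        then have i: "i < n" by simp
        have "norm (g i xb - g i (x k i)) \<le> Lc i * norm (xb - x k i)"
          using lips i unfolding lipschitz_on_def dist_norm by blast
        also have "\<dots> \<le> L * norm (xb - x k i)" using LcL[OF i] by (simp add: mult_right_mono)
        finally show "norm (g i xb - g i (x k i)) \<le> L * norm (x k i - xb)" by (simp add: norm_minus_commute)
      qed
      finally show ?thesis .
    qed
    have sn2: "(norm (\<Sum>i<n. g i xb - g i (x k i)))\<^sup>2 \<le> real n * (L\<^sup>2 * dev n (x k))"
    proof -
      have "(norm (\<Sum>i<n. g i xb - g i (x k i)))\<^sup>2 \<le> (\<Sum>i<n. L * norm (x k i - xb))\<^sup>2"
        by (rule power_mono[OF sn]) simp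
      also have "\<dots> \<le> real n * (\<Sum>i<n. (L * norm (x k i - xb))\<^sup>2)" by (rule sum_sq_le_card)
      also have "(\<Sum>i<n. (L * norm (x k i - xb))\<^sup>2) = L\<^sup>2 * dev n (x k)"
        by (simp add: dev_def sq_def xbx power_mult_distrib sum_distrib_left)
      finally show ?thesis .
    qed
    have devb: "dev n (x k) \<le> \<beta> ^ (2 * t) * D\<^sup>2"
    proof -
      have "dev n (x k) \<le> \<beta> ^ (2 * t) * dev n (y k)"
        unfolding x_def beta_def by (rule N(3))
      also have "\<dots> \<le> \<beta> ^ (2 * t) * sq n (y k)"
        by (rule mult_left_mono[OF N(4)]) (use beta_bds in simp)
      also have "sq n (y k) \<le> D\<^sup>2"
        unfolding snorm_sq2[symmetric] by (rule power_mono[OF ybound snorm_nonneg])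
      then have "\<beta> ^ (2 * t) * sq n (y k) \<le> \<beta> ^ (2 * t) * D\<^sup>2"
        by (rule mult_left_mono) (use beta_bds in simp)
      finally show ?thesis .
    qed
    have Bb: "(norm B)\<^sup>2 \<le> \<alpha>\<^sup>2 * (L\<^sup>2 * (\<beta> ^ (2 * t) * D\<^sup>2))"
    proof -
      have "(norm B)\<^sup>2 = \<alpha>\<^sup>2 * ((1 / real n)\<^sup>2 * (norm (\<Sum>i<n. g i xb - g i (x k i)))\<^sup>2)"
        unfolding B_def GG using alpha_pos by (simp add: power_mult_distrib power_divide)
      also have "(1 / real n)\<^sup>2 * (norm (\<Sum>i<n. g i xb - g i (x k i)))\<^sup>2 \<le> (1 / real n)\<^sup>2 * (real n * (L\<^sup>2 * dev n (x k)))"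
        by (rule mult_left_mono[OF sn2]) simp
      also have "\<dots> = L\<^sup>2 * dev n (x k) / real n" using rn by (simp add: power2_eq_square field_simps)
      also have "\<dots> \<le> L\<^sup>2 * dev n (x k)"
      proof -
        have "0 \<le> L\<^sup>2 * dev n (x k)" by (simp add: dev_def sq_nonneg)
        then show ?thesis using n_pos by (simp add: divide_le_eq mult_le_cancel_left1)
      qed
      also have "\<dots> \<le> L\<^sup>2 * (\<beta> ^ (2 * t) * D\<^sup>2)" by (rule mult_left_mono[OF devb]) simp
      finally show ?thesis by (simp add: mult_left_mono)
    qed
    have ad: "0 < \<alpha> * \<delta>" using alpha_pos d0 by simp
    have "(norm (xbar (Suc k) - xstar))\<^sup>2 \<le> (1 + \<alpha> * \<delta>) * (norm A)\<^sup>2 + (1 + 1 / (\<alpha> * \<delta>)) * (norm B)\<^sup>2"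
      unfolding AB by (rule young[OF ad])
    also have "\<dots> \<le> (1 + \<alpha> * \<delta>) * ((1 - \<alpha> * c2) * (norm (xb - xstar))\<^sup>2) + (1 + 1 / (\<alpha> * \<delta>)) * (\<alpha>\<^sup>2 * (L\<^sup>2 * (\<beta> ^ (2 * t) * D\<^sup>2)))"
      by (rule add_mono; rule mult_left_mono) (use Ab Bb ad in auto)
    also have "\<dots> = (1 - \<alpha> * c2 + \<alpha> * \<delta> - \<alpha>\<^sup>2 * \<delta> * c2) * (norm (xbar k - xstar))\<^sup>2
               + \<alpha> * (\<alpha> + 1 / \<delta>) * D\<^sup>2 * L\<^sup>2 * \<beta> ^ (2 * t)"
      unfolding xb_def using alpha_pos d0 by (simp add: field_simps power2_eq_square)
    finally show ?thesis .
  qed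
  show ?thesis
  proof (intro conjI impI allI)
    show "\<And>\<delta> k. 0 < \<delta> \<Longrightarrow> (norm (xbar (Suc k) - xstar))\<^sup>2
             \<le> (1 - \<alpha> * c2 + \<alpha> * \<delta> - \<alpha>\<^sup>2 * \<delta> * c2) * (norm (xbar k - xstar))\<^sup>2
               + \<alpha> * (\<alpha> + 1 / \<delta>) * D\<^sup>2 * L\<^sup>2 * \<beta> ^ (2 * t)" by (rule onestep)
  next
    assume ac: "\<alpha> * c2 < 1"
    define \<delta> where "\<delta> = c2 / (2 * (1 - \<alpha> * c2))"
    define c1 where "c1 = sqrt (1 - \<alpha> * c2 + \<alpha> * \<delta> - \<alpha>\<^sup>2 * \<delta> * c2)"
    have d0: "0 < \<delta>" unfolding \<delta>_def using c2_pos ac by simp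
    have inner: "1 - \<alpha> * c2 + \<alpha> * \<delta> - \<alpha>\<^sup>2 * \<delta> * c2 = 1 - \<alpha> * c2 / 2"
    proof -
      have "\<alpha> * \<delta> - \<alpha>\<^sup>2 * \<delta> * c2 = \<alpha> * \<delta> * (1 - \<alpha> * c2)" by (simp add: power2_eq_square algebra_simps)
      also have "\<dots> = \<alpha> * c2 / 2" unfolding \<delta>_def using ac by (simp add: field_simps)
      finally show ?thesis by simp
    qed
    have ac0: "0 < \<alpha> * c2" using alpha_pos c2_pos by simp
    have c1e: "c1 = sqrt (1 - \<alpha> * c2 / 2)" unfolding c1_def inner ..
    have c1p: "0 < c1" unfolding c1e using ac by simp
    have c11: "c1 < 1" unfolding c1e using ac0 by simp
    have c1sq: "c1\<^sup>2 = 1 - \<alpha> * c2 / 2" unfolding c1e using ac by simp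
    define B where "B = \<alpha> * (\<alpha> + 1 / \<delta>) * D\<^sup>2 * L\<^sup>2 * \<beta> ^ (2 * t)"
    have B0: "0 \<le> B" unfolding B_def using alpha_pos d0 beta_bds by simp
    define E where "E = (\<lambda>k. (norm (xbar k - xstar))\<^sup>2)"
    have Est: "E (Suc k) \<le> c1\<^sup>2 * E k + B" for k
      unfolding E_def B_def c1sq inner[symmetric] by (rule onestep[OF d0])
    have Eb: "E k \<le> (c1\<^sup>2) ^ k * E 0 + B / (1 - c1\<^sup>2)" for k
      by (rule sq_rec_bound[where e=E and c="c1\<^sup>2" and B=B, OF Est _ _ B0]) (use c1p c11 in \<open>simp_all add: power_less_one_iff\<close>)
    have BB: "B / (1 - c1\<^sup>2) = (L * D * \<beta> ^ t / c2 * sqrt (2 * (2 - \<alpha> * c2)))\<^sup>2"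
    proof -
      have "\<alpha> + 1 / \<delta> = (2 - \<alpha> * c2) / c2" unfolding \<delta>_def using c2_pos ac by (simp add: field_simps)
      then have "B / (1 - c1\<^sup>2) = \<alpha> * ((2 - \<alpha> * c2) / c2) * D\<^sup>2 * L\<^sup>2 * \<beta> ^ (2 * t) / (\<alpha> * c2 / 2)"
        unfolding B_def c1sq by simp
      also have "\<dots> = 2 * (2 - \<alpha> * c2) * D\<^sup>2 * L\<^sup>2 * \<beta> ^ (2 * t) / c2\<^sup>2"
        using alpha_pos c2_pos by (simp add: field_simps power2_eq_square)
      also have "\<dots> = (L * D * \<beta> ^ t / c2 * sqrt (2 * (2 - \<alpha> * c2)))\<^sup>2"
        using ac by (simp add: power_mult_distrib power_divide power_mult[symmetric] mult.commute field_simps)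
      finally show ?thesis .
    qed
    have T0: "0 \<le> L * D * \<beta> ^ t / c2 * sqrt (2 * (2 - \<alpha> * c2))"
    proof -
      have "0 \<le> sqrt (2 * (2 - \<alpha> * c2))" using ac by simp
      moreover have "0 \<le> L * D * \<beta> ^ t / c2" using Lpos D0 beta_bds c2_pos by simp
      ultimately show ?thesis by (rule mult_nonneg_nonneg[rotated])
    qed
    have allk: "\<forall>k. norm (xbar k - xstar) \<le> c1 ^ k * norm (xbar 0 - xstar) + L * D * \<beta> ^ t / c2 * sqrt (2 * (2 - \<alpha> * c2))"
    proof
      fix k
      have "(norm (xbar k - xstar))\<^sup>2 \<le> (c1 ^ k * norm (xbar 0 - xstar))\<^sup>2 + (L * D * \<beta> ^ t / c2 * sqrt (2 * (2 - \<alpha> * c2)))\<^sup>2"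
        using Eb[of k] unfolding E_def BB by (simp add: power_mult_distrib power_mult[symmetric] mult.commute)
      also have "\<dots> \<le> (c1 ^ k * norm (xbar 0 - xstar) + L * D * \<beta> ^ t / c2 * sqrt (2 * (2 - \<alpha> * c2)))\<^sup>2"
      proof -
        have a0: "0 \<le> c1 ^ k * norm (xbar 0 - xstar)" using c1p by simp
        have "0 \<le> 2 * (c1 ^ k * norm (xbar 0 - xstar)) * (L * D * \<beta> ^ t / c2 * sqrt (2 * (2 - \<alpha> * c2)))"
          using mult_nonneg_nonneg[OF a0 T0] by simp
        then show ?thesis unfolding power2_sum by linarith
      qed
      finally have sq: "(norm (xbar k - xstar))\<^sup>2 \<le> (c1 ^ k * norm (xbar 0 - xstar) + L * D * \<beta> ^ t / c2 * sqrt (2 * (2 - \<alpha> * c2)))\<^sup>2" .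
      have nn: "0 \<le> c1 ^ k * norm (xbar 0 - xstar) + L * D * \<beta> ^ t / c2 * sqrt (2 * (2 - \<alpha> * c2))"
        using T0 c1p by simp
      show "norm (xbar k - xstar) \<le> c1 ^ k * norm (xbar 0 - xstar) + L * D * \<beta> ^ t / c2 * sqrt (2 * (2 - \<alpha> * c2))"
        using power2_le_imp_le[OF sq nn] .
    qed
    show "let \<delta> = c2 / (2 * (1 - \<alpha> * c2));
                c1 = sqrt (1 - \<alpha> * c2 + \<alpha> * \<delta> - \<alpha>\<^sup>2 * \<delta> * c2)
            in c1 = sqrt (1 - \<alpha> * c2 / 2) \<and> 0 < c1 \<and> c1 < 1 \<and>
               (\<forall>k. norm (xbar k - xstar)
                      \<le> c1 ^ k * norm (xbar 0 - xstar)
                        + L * D * \<beta> ^ t / c2 * sqrt (2 * (2 - \<alpha> * c2)))"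
    proof -
      have "c1 = sqrt (1 - \<alpha> * c2 / 2) \<and> 0 < c1 \<and> c1 < 1 \<and>
               (\<forall>k. norm (xbar k - xstar) \<le> c1 ^ k * norm (xbar 0 - xstar) + L * D * \<beta> ^ t / c2 * sqrt (2 * (2 - \<alpha> * c2)))"
        using c1e c1p c11 allk by (intro conjI)
      then show ?thesis unfolding Let_def c1_def \<delta>_def .
    qed
  qed
qed

theorem theorem2:
  fixes W :: "nat \<Rightarrow> nat \<Rightarrow> real" and n t :: nat
    and f :: "nat \<Rightarrow> 'a::euclidean_space \<Rightarrow> real" and g :: "nat \<Rightarrow> 'a \<Rightarrow> 'a"
    and \<mu> Lc :: "nat \<Rightarrow> real" and \<alpha> \<beta> :: real
    and s0 xstar :: 'a and ustar :: "nat \<Rightarrow> 'a"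
  assumes n_pos: "1 \<le> n" and t_pos: "1 \<le> t"
    and W_sds: "symmetric_doubly_stochastic W n"
    and W_diag: "\<forall>i<n. 0 < W i i"
    and W_conn: "connected_network W n"
    and W_one: "simple_eigenvalue_one W n"
    and W_others: "\<forall>e. is_eigenvalue W n e \<and> e \<noteq> 1 \<longrightarrow> -1 < e \<and> e < 1"
    and beta_def: "\<beta> = second_eig_mag W n"
    and beta_bds: "0 < \<beta>" "\<beta> < 1"
    and grad: "\<forall>i<n. is_gradient (f i) (g i)"
    and mu_pos: "\<forall>i<n. 0 < \<mu> i"
    and sconv: "\<forall>i<n. strongly_convex (\<mu> i) (f i)"
    and lips: "\<forall>i<n. (Lc i)-lipschitz_on UNIV (g i)"
    and ustar_min: "\<forall>i<n. \<forall>z. f i (ustar i) \<le> f i z"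
    and xstar_min: "\<forall>z. (\<Sum>i<n. f i xstar) \<le> (\<Sum>i<n. f i z)"
    and alpha_pos: "0 < \<alpha>"
    and alpha_le: "\<alpha> \<le> min (1 / Max (Lc ` {..<n}))
                        (2 / ((\<Sum>i<n. \<mu> i) / real n + (\<Sum>i<n. Lc i) / real n))"
  shows
    "let L = Max (Lc ` {..<n});
         mu_bar = (\<Sum>i<n. \<mu> i) / real n;
         L_bar = (\<Sum>i<n. Lc i) / real n;
         c2 = 2 * mu_bar * L_bar / (mu_bar + L_bar);
         \<gamma> = Min ((\<lambda>i. \<mu> i * Lc i / (\<mu> i + Lc i)) ` {..<n});
         \<nu> = 2 * \<alpha> * \<gamma>;
         D = snorm n (\<lambda>i. s0 - ustar i) + (\<nu> + 4) / \<nu> * snorm n ustar;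
         xbar = (\<lambda>k. avg n (near_dgd_x W n t \<alpha> g (\<lambda>i. s0) k))
     in (\<forall>\<delta>>0. \<forall>k.
           (norm (xbar (Suc k) - xstar))\<^sup>2
             \<le> (1 - \<alpha> * c2 + \<alpha> * \<delta> - \<alpha>\<^sup>2 * \<delta> * c2) * (norm (xbar k - xstar))\<^sup>2
               + \<alpha> * (\<alpha> + 1 / \<delta>) * D\<^sup>2 * L\<^sup>2 * \<beta> ^ (2 * t))
      \<and> (\<alpha> * c2 < 1 \<longrightarrow>
           (let \<delta> = c2 / (2 * (1 - \<alpha> * c2));
                c1 = sqrt (1 - \<alpha> * c2 + \<alpha> * \<delta> - \<alpha>\<^sup>2 * \<delta> * c2)
            in c1 = sqrt (1 - \<alpha> * c2 / 2) \<and> 0 < c1 \<and> c1 < 1 \<and>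
               (\<forall>k. norm (xbar k - xstar)
                      \<le> c1 ^ k * norm (xbar 0 - xstar)
                        + L * D * \<beta> ^ t / c2 * sqrt (2 * (2 - \<alpha> * c2)))))"
  unfolding Let_def by (rule core[OF assms, unfolded Let_def])

end
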